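(* Let $f:\mathbb{R}^+\to\mathbb{R}$ be twice continuously differentiable with $f>0$, $f'>0$, $f''>0$, and assume there exist constants $c_1\geq 1/2$ and $c_2>0$ such that $c_1 f''(x)\leq f''(y)\leq c_2 f''(x)$ whenever $0<x\leq y\leq 2x$. Then there exists a constant $C=C(f)$ such that for every function $\varphi$ from the integers to $\mathbb{C}$ with $|\varphi|\leq 1$, for all real $A\geq 2$ and all real $K>0$, \[ \frac 1A\left|\sum_{A<n\leq 2A}\varphi\bigl(\lfloor f(n)\rfloor\bigr)-\sum_{f(A)<m\leq f(2A)}\varphi(m)\,(f^{-1})'(m)\right| \leq C\left(f''(A)K^2+\frac{(\log A)^2}{K}+I(A,K)\right), \] where \[ I(A,K)=\frac{1}{f'(2A)-f'(A)}\int_{f'(A)}^{f'(2A)}\sup_{f(A)<\beta\leq f(2A)}\frac 1K\left|\sum_{0<n\leq K}\varphi\bigl(\lfloor n\alpha+\beta\rfloor\bigr)-\frac 1\alpha\sum_{\beta<m\leq \beta+K\alpha}\varphi(m)\right|\,d\alpha . \]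
   Context: $\lfloor\cdot\rfloor$ is the floor function; sums over $m$ or $n$ range over integers in the indicated intervals. $\varphi$ is a complex-valued arithmetic function bounded by $1$ (values at nonpositive integers may be taken to be $0$). $f^{-1}$ is the inverse function of the strictly increasing function $f$. *)

theory Defs
  imports "HOL-Analysis.Analysis"
begin

definition I_avg :: "(real \<Rightarrow> real) \<Rightarrow> (real \<Rightarrow> real) \<Rightarrow> (int \<Rightarrow> complex) \<Rightarrow> real \<Rightarrow> real \<Rightarrow> real" where
  "I_avg f f' \<phi> A K =
     (1 / (f' (2*A) - f' A)) *
     integral {f' A .. f' (2*A)}
       (\<lambda>\<alpha>. (SUP \<beta>\<in>{f A <.. f (2*A)}.
          (1 / K) * norm ((\<Sum>n\<in>{n::int. 0 < n \<and> real_of_int n \<le> K}. \<phi> \<lfloor>real_of_int n * \<alpha> + \<beta>\<rfloor>)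
              - complex_of_real (1 / \<alpha>) *
                (\<Sum>m\<in>{m::int. \<beta> < real_of_int m \<and> real_of_int m \<le> \<beta> + K * \<alpha>}. \<phi> m))))"

end

theory Submission
  imports Defs
begin

lemma int_set_interval: "{m::int. a < real_of_int m \<and> real_of_int m \<le> b} = {\<lfloor>a\<rfloor>+1..\<lfloor>b\<rfloor>}"
proof -
  have "\<And>x::int. a < real_of_int x \<longleftrightarrow> \<lfloor>a\<rfloor> + 1 \<le> x"
    using floor_less_iff[of a] by (metis zless_add1_eq add1_zle_eq)
  moreover have "\<And>x::int. real_of_int x \<le> b \<longleftrightarrow> x \<le> \<lfloor>b\<rfloor>" by (simp add: le_floor_iff)
  ultimately show ?thesis by auto
qed

lemma finite_int_set_interval: "finite {m::int. a < real_of_int m \<and> real_of_int m \<le> b}"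
  unfolding int_set_interval by simp

lemma card_int_set_interval:
  assumes "a \<le> b"
  shows "real (card {m::int. a < real_of_int m \<and> real_of_int m \<le> b}) \<le> b - a + 1"
proof -
  have "real (card {m::int. a < real_of_int m \<and> real_of_int m \<le> b}) = real (nat (\<lfloor>b\<rfloor> - \<lfloor>a\<rfloor>))"
    unfolding int_set_interval by simp
  also have "\<dots> = real_of_int (\<lfloor>b\<rfloor> - \<lfloor>a\<rfloor>)"
    using floor_mono[OF assms] by simp
  also have "\<dots> \<le> b - a + 1"
    using of_int_floor_le[of b] real_of_int_floor_add_one_gt[of a] by linarith
  finally show ?thesis .
qed

lemma card_int_set_interval0:
  assumes "b \<le> a"
  shows "card {m::int. a < real_of_int m \<and> real_of_int m \<le> b} = 0"
  using assms by (auto simp: card_eq_0_iff)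

lemma nK_set: "{n::int. 0 < n \<and> real_of_int n \<le> K} = {1..\<lfloor>K\<rfloor>}"
  by (auto simp: le_floor_iff)

definition nearZ :: "real \<Rightarrow> real \<Rightarrow> bool" where
  "nearZ y d \<longleftrightarrow> (\<exists>m::int. \<bar>y - real_of_int m\<bar> \<le> d)"

lemma nearZ_mono: "nearZ y d \<Longrightarrow> d \<le> d' \<Longrightarrow> nearZ y d'"
  unfolding nearZ_def by (meson order.trans)

lemma floor_mismatch:
  fixes x y \<delta> :: real
  assumes "x \<le> y" "y \<le> x + \<delta>" "\<lfloor>x\<rfloor> \<noteq> \<lfloor>y\<rfloor>"
  shows "\<exists>m::int. 0 < real_of_int m - x \<and> real_of_int m - x \<le> \<delta>"
proof -
  have "\<lfloor>x\<rfloor> < \<lfloor>y\<rfloor>" using assms floor_mono[of x y] by linarith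
  then have "x < real_of_int \<lfloor>y\<rfloor>" by (meson floor_less_iff)
  moreover have "real_of_int \<lfloor>y\<rfloor> \<le> y" by simp
  ultimately show ?thesis using assms(2) by (intro exI[of _ "\<lfloor>y\<rfloor>"]) linarith
qed

lemma mismatch_card:
  fixes \<alpha> \<beta> \<delta> :: real and k :: int and Bad :: "int set"
  assumes sub: "Bad \<subseteq> {1..k}"
    and bad: "\<And>h. h \<in> Bad \<Longrightarrow> \<exists>m::int. 0 < real_of_int m - (real_of_int h*\<alpha>+\<beta>) \<and> real_of_int m - (real_of_int h*\<alpha>+\<beta>) \<le> \<delta>"
  shows "card Bad \<le> 1 + card {d\<in>{1..k}. nearZ (real_of_int d*\<alpha>) \<delta>}"
proof (cases "Bad = {}")
  case True then show ?thesis by simp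
next
  case False
  have fin: "finite Bad" using sub finite_subset by blast
  define h0 where "h0 = Min Bad"
  have h0B: "h0 \<in> Bad" using Min_in fin False h0_def by blast
  have h0le: "\<And>h. h\<in>Bad \<Longrightarrow> h0 \<le> h" using fin h0_def by simp
  obtain m0 where m0: "0 < real_of_int m0 - (real_of_int h0*\<alpha>+\<beta>)" "real_of_int m0 - (real_of_int h0*\<alpha>+\<beta>) \<le> \<delta>"
    using bad h0B by blast
  have img: "(\<lambda>h. h - h0) ` (Bad - {h0}) \<subseteq> {d\<in>{1..k}. nearZ (real_of_int d*\<alpha>) \<delta>}"
  proof
    fix d assume "d \<in> (\<lambda>h. h - h0) ` (Bad - {h0})"
    then obtain h where h: "h \<in> Bad" "h \<noteq> h0" "d = h - h0" by blast
    obtain m where m: "0 < real_of_int m - (real_of_int h*\<alpha>+\<beta>)" "real_of_int m - (real_of_int h*\<alpha>+\<beta>) \<le> \<delta>"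
      using bad h(1) by blast
    have "h0 < h" using h0le h by force
    moreover have "h \<le> k" "1 \<le> h0" using sub h h0B by auto
    moreover have "\<bar>real_of_int d * \<alpha> - real_of_int (m - m0)\<bar> \<le> \<delta>"
    proof -
      have "real_of_int d * \<alpha> - real_of_int (m - m0) =
            (real_of_int m0 - (real_of_int h0*\<alpha>+\<beta>)) - (real_of_int m - (real_of_int h*\<alpha>+\<beta>))"
        unfolding h(3) by (simp add: algebra_simps)
      then show ?thesis using m m0 by linarith
    qed
    moreover have "nearZ (real_of_int d*\<alpha>) \<delta>"
      unfolding nearZ_def by (rule exI[of _ "m - m0"]) fact
    ultimately show "d \<in> {d\<in>{1..k}. nearZ (real_of_int d*\<alpha>) \<delta>}"
      using h(3) by auto
  qed
  have "card Bad = card (Bad - {h0}) + 1" using fin h0B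
    by (metis Suc_eq_plus1 card.remove)
  also have "card (Bad - {h0}) = card ((\<lambda>h. h - h0) ` (Bad - {h0}))"
    by (rule card_image[symmetric]) (auto simp: inj_on_def)
  also have "\<dots> \<le> card {d\<in>{1..k}. nearZ (real_of_int d*\<alpha>) \<delta>}"
    by (rule card_mono[OF _ img]) (rule finite_subset[of _ "{1..k}"], auto)
  finally show ?thesis by simp
qed

lemma sum_phi_diff:
  fixes \<phi> :: "int \<Rightarrow> complex" and u v :: "'a \<Rightarrow> int"
  assumes "finite H" "\<And>m. norm (\<phi> m) \<le> 1"
  shows "norm ((\<Sum>h\<in>H. \<phi> (u h)) - (\<Sum>h\<in>H. \<phi> (v h))) \<le> 2 * real (card {h\<in>H. u h \<noteq> v h})"
proof -
  have "norm ((\<Sum>h\<in>H. \<phi> (u h)) - (\<Sum>h\<in>H. \<phi> (v h))) = norm (\<Sum>h\<in>H. \<phi> (u h) - \<phi> (v h))"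
    by (simp add: sum_subtractf)
  also have "\<dots> \<le> (\<Sum>h\<in>H. norm (\<phi> (u h) - \<phi> (v h)))" by (rule norm_sum)
  also have "\<dots> \<le> (\<Sum>h\<in>H. if u h \<noteq> v h then 2 else 0)"
  proof (rule sum_mono)
    fix h assume "h \<in> H"
    have "norm (\<phi> (u h) - \<phi> (v h)) \<le> norm (\<phi> (u h)) + norm (\<phi> (v h))" by (rule norm_triangle_ineq4)
    then show "norm (\<phi> (u h) - \<phi> (v h)) \<le> (if u h \<noteq> v h then 2 else 0)"
      using assms(2)[of "u h"] assms(2)[of "v h"] by auto
  qed
  also have "\<dots> = (\<Sum>h\<in>{h\<in>H. u h \<noteq> v h}. 2)" using assms(1) by (rule sum.inter_filter[symmetric])
  also have "\<dots> = 2 * real (card {h\<in>H. u h \<noteq> v h})" by simp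
  finally show ?thesis .
qed

lemma shift_one:
  fixes G :: "int \<Rightarrow> 'a::real_normed_vector"
  assumes "\<And>n. p \<le> n \<Longrightarrow> n \<le> q+1 \<Longrightarrow> norm (G n) \<le> B" and B: "0 \<le> B"
  shows "norm ((\<Sum>t\<in>{p..q}. G (t+1)) - (\<Sum>t\<in>{p..q}. G t)) \<le> 2*B"
proof (cases "p \<le> q")
  case True
  have e1: "(\<Sum>t\<in>{p..q}. G (t+1)) = (\<Sum>t\<in>{p+1..q+1}. G t)"
    by (rule sum.reindex_bij_witness[of _ "\<lambda>t. t - 1" "\<lambda>t. t+1"]) auto
  have s1: "{p+1..q+1} = insert (q+1) {p+1..q}" using True by auto
  have s2: "{p..q} = insert p {p+1..q}" using True by auto
  have e2: "(\<Sum>t\<in>{p..q}. G (t+1)) = G (q+1) + (\<Sum>t\<in>{p+1..q}. G t)" using e1 s1 by simp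
  have e3: "(\<Sum>t\<in>{p..q}. G t) = G p + (\<Sum>t\<in>{p+1..q}. G t)" using s2 by simp
  have "(\<Sum>t\<in>{p..q}. G (t+1)) - (\<Sum>t\<in>{p..q}. G t) = G (q+1) - G p"
    unfolding e2 e3 by simp
  also have "norm \<dots> \<le> norm (G (q+1)) + norm (G p)" by (rule norm_triangle_ineq4)
  also have "\<dots> \<le> 2*B" using assms(1)[of "q+1"] assms(1)[of p] True by simp
  finally show ?thesis .
next
  case False
  then show ?thesis using B by simp
qed

lemma shift_nat_aux:
  fixes G :: "int \<Rightarrow> 'a::real_normed_vector"
  assumes B: "0 \<le> B"
  shows "(\<forall>n. p \<le> n \<and> n \<le> q + int j \<longrightarrow> norm (G n) \<le> B) \<longrightarrow>
         norm ((\<Sum>t\<in>{p..q}. G (t + int j)) - (\<Sum>t\<in>{p..q}. G t)) \<le> 2*B*real j"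
proof (induction j)
  case 0 then show ?case by simp
next
  case (Suc j)
  show ?case
  proof
    assume H: "\<forall>n. p \<le> n \<and> n \<le> q + int (Suc j) \<longrightarrow> norm (G n) \<le> B"
    have "norm ((\<Sum>t\<in>{p..q}. G (t + 1 + int j)) - (\<Sum>t\<in>{p..q}. G (t + int j))) \<le> 2*B"
    proof (rule shift_one[where p=p and q=q and G="\<lambda>t. G (t + int j)" and B=B, OF _ B])
      fix n assume "p \<le> n" "n \<le> q+1"
      then show "norm (G (n + int j)) \<le> B" using H by simp
    qed
    then have a1: "norm ((\<Sum>t\<in>{p..q}. G (t + int (Suc j))) - (\<Sum>t\<in>{p..q}. G (t + int j))) \<le> 2*B"
      by (simp add: algebra_simps)
    have a2: "norm ((\<Sum>t\<in>{p..q}. G (t + int j)) - (\<Sum>t\<in>{p..q}. G t)) \<le> 2*B*real j"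
      using Suc.IH H by simp
    have "norm ((\<Sum>t\<in>{p..q}. G (t + int (Suc j))) - (\<Sum>t\<in>{p..q}. G t)) \<le> 2*B + 2*B*real j"
      using norm_triangle_ineq[of "(\<Sum>t\<in>{p..q}. G (t + int (Suc j))) - (\<Sum>t\<in>{p..q}. G (t + int j))"
        "(\<Sum>t\<in>{p..q}. G (t + int j)) - (\<Sum>t\<in>{p..q}. G t)"] a1 a2 by simp
    then show "norm ((\<Sum>t\<in>{p..q}. G (t + int (Suc j))) - (\<Sum>t\<in>{p..q}. G t)) \<le> 2*B*real (Suc j)"
      by (simp add: algebra_simps)
  qed
qed

lemma shift_int:
  fixes G :: "int \<Rightarrow> 'a::real_normed_vector"
  assumes "\<And>n. p \<le> n \<Longrightarrow> n \<le> q + h \<Longrightarrow> norm (G n) \<le> B" and B: "0 \<le> B" and h: "0 \<le> h"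
  shows "norm ((\<Sum>t\<in>{p..q}. G (t + h)) - (\<Sum>t\<in>{p..q}. G t)) \<le> 2*B*real_of_int h"
  using shift_nat_aux[OF B, where p=p and q=q and G=G and j="nat h"] assms(1) h by simp

lemma split_int_interval_sum:
  fixes G :: "int \<Rightarrow> 'a::comm_monoid_add"
  assumes "x \<le> y" "y \<le> z"
  shows "(\<Sum>m\<in>{m::int. x < real_of_int m \<and> real_of_int m \<le> z}. G m) =
         (\<Sum>m\<in>{m::int. x < real_of_int m \<and> real_of_int m \<le> y}. G m) + (\<Sum>m\<in>{m::int. y < real_of_int m \<and> real_of_int m \<le> z}. G m)"
proof -
  have "{m::int. x < real_of_int m \<and> real_of_int m \<le> z} =
        {m::int. x < real_of_int m \<and> real_of_int m \<le> y} \<union> {m::int. y < real_of_int m \<and> real_of_int m \<le> z}"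
    using assms by auto
  moreover have "{m::int. x < real_of_int m \<and> real_of_int m \<le> y} \<inter> {m::int. y < real_of_int m \<and> real_of_int m \<le> z} = {}"
    by auto
  ultimately show ?thesis by (simp add: sum.union_disjoint finite_int_set_interval)
qed

lemma sum_blocks:
  fixes v :: "int \<Rightarrow> real" and G :: "int \<Rightarrow> 'a::comm_monoid_add"
  assumes mono: "\<And>s t. a \<le> s \<Longrightarrow> s \<le> t \<Longrightarrow> v s \<le> v t" and ab: "a \<le> b"
  shows "(\<Sum>s\<in>{a..<b}. \<Sum>m\<in>{m::int. v s < real_of_int m \<and> real_of_int m \<le> v (s+1)}. G m) =
         (\<Sum>m\<in>{m::int. v a < real_of_int m \<and> real_of_int m \<le> v b}. G m)"
  using ab
proof (induction b rule: int_ge_induct)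
  case base
  have e: "{m::int. v a < real_of_int m \<and> real_of_int m \<le> v a} = {}" by auto
  show ?case unfolding e by simp
next
  case (step b)
  have "{a..<b+1} = insert b {a..<b}" using step by auto
  then have "(\<Sum>s\<in>{a..<b+1}. \<Sum>m\<in>{m::int. v s < real_of_int m \<and> real_of_int m \<le> v (s+1)}. G m) =
     (\<Sum>m\<in>{m::int. v b < real_of_int m \<and> real_of_int m \<le> v (b+1)}. G m) +
     (\<Sum>s\<in>{a..<b}. \<Sum>m\<in>{m::int. v s < real_of_int m \<and> real_of_int m \<le> v (s+1)}. G m)" by simp
  also have "\<dots> = (\<Sum>m\<in>{m::int. v a < real_of_int m \<and> real_of_int m \<le> v (b+1)}. G m)"
    using step.IH split_int_interval_sum[of "v a" "v b" "v (b+1)" G] mono[of a b] mono[of b "b+1"] step.hyps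
    by (simp add: add.commute)
  finally show ?case .
qed


lemma gap_mono:
  fixes u :: "int \<Rightarrow> real"
  assumes gap: "\<And>t. a \<le> t \<Longrightarrow> t < b \<Longrightarrow> u t + \<gamma> \<le> u (t+1)"
  assumes "a \<le> s" "s \<le> t" "t \<le> b"
  shows "u s + \<gamma> * real_of_int (t - s) \<le> u t"
  using assms(3,4)
proof (induction t rule: int_ge_induct)
  case base then show ?case by simp
next
  case (step t)
  have "u s + \<gamma> * real_of_int (t - s) \<le> u t" using step by simp
  moreover have "u t + \<gamma> \<le> u (t+1)" using gap[of t] step assms(2) by simp
  ultimately show ?case by (simp add: algebra_simps)
qed

lemma card_int_closed:
  assumes "x \<le> y"
  shows "real (card {m::int. x \<le> real_of_int m \<and> real_of_int m \<le> y}) \<le> y - x + 1"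
proof -
  have "{m::int. x \<le> real_of_int m \<and> real_of_int m \<le> y} \<subseteq> {m::int. x - 1 < real_of_int m \<and> real_of_int m \<le> y}"
    by auto
  then have "card {m::int. x \<le> real_of_int m \<and> real_of_int m \<le> y} \<le> card {m::int. x - 1 < real_of_int m \<and> real_of_int m \<le> y}"
    by (intro card_mono finite_int_set_interval)
  then have "real (card {m::int. x \<le> real_of_int m \<and> real_of_int m \<le> y}) \<le> real (card {m::int. x - 1 < real_of_int m \<and> real_of_int m \<le> y})"
    by linarith
  also have "\<dots> \<le> y - (x - 1) + 1" using assms by (intro card_int_set_interval) simp
  finally have A: "real (card {m::int. x \<le> real_of_int m \<and> real_of_int m \<le> y}) \<le> y - x + 2" by simp
  have "{m::int. x \<le> real_of_int m \<and> real_of_int m \<le> y} = {\<lceil>x\<rceil>..\<lfloor>y\<rfloor>}"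
    by (auto simp: ceiling_le_iff le_floor_iff)
  then have "real (card {m::int. x \<le> real_of_int m \<and> real_of_int m \<le> y}) = real (nat (\<lfloor>y\<rfloor> + 1 - \<lceil>x\<rceil>))"
    by simp
  also have "\<dots> \<le> y - x + 1"
  proof (cases "\<lceil>x\<rceil> \<le> \<lfloor>y\<rfloor> + 1")
    case True
    then have "real (nat (\<lfloor>y\<rfloor> + 1 - \<lceil>x\<rceil>)) = real_of_int \<lfloor>y\<rfloor> + 1 - real_of_int \<lceil>x\<rceil>" by simp
    then show ?thesis using of_int_floor_le[of y] le_of_int_ceiling[of x] by linarith
  next
    case False then show ?thesis using assms by simp
  qed
  finally show ?thesis .
qed

lemma near_count:
  fixes u :: "int \<Rightarrow> real" and a b :: int and \<gamma> \<delta> :: real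
  assumes gap: "\<And>t. a \<le> t \<Longrightarrow> t < b \<Longrightarrow> u t + \<gamma> \<le> u (t+1)" and gpos: "\<gamma> > 0" and dpos: "\<delta> \<ge> 0" and ab: "a \<le> b"
  shows "real (card {t\<in>{a..b}. nearZ (u t) \<delta>}) \<le> (u b - u a + 2*\<delta> + 1) * (2*\<delta>/\<gamma> + 1)"
proof -
  note gm = gap_mono[where a=a and b=b and u=u and \<gamma>=\<gamma>, OF gap]
  define S where "S = {t\<in>{a..b}. nearZ (u t) \<delta>}"
  define nm where "nm t = (SOME m::int. \<bar>u t - real_of_int m\<bar> \<le> \<delta>)" for t
  have nm: "\<bar>u t - real_of_int (nm t)\<bar> \<le> \<delta>" if "t \<in> S" for t
    using that unfolding S_def nearZ_def nm_def by (auto intro: someI_ex)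
  have ua: "u a \<le> u t" "u t \<le> u b" if "t \<in> {a..b}" for t
    using gm[of a t] gm[of t b] that gpos ab
    by (auto intro: order_trans[rotated] simp: mult_nonneg_nonneg)
  define R where "R = {m::int. u a - \<delta> \<le> real_of_int m \<and> real_of_int m \<le> u b + \<delta>}"
  have img: "nm ` S \<subseteq> R"
  proof
    fix m assume "m \<in> nm ` S"
    then obtain t where t: "t \<in> S" "m = nm t" by blast
    have "t \<in> {a..b}" using t S_def by auto
    then show "m \<in> R" using nm[OF t(1)] ua[of t] t(2) unfolding R_def by auto
  qed
  have ub: "u a \<le> u b" using ua[of a] ab by auto
  have cardR: "real (card R) \<le> u b - u a + 2*\<delta> + 1"
    using card_int_closed[of "u a - \<delta>" "u b + \<delta>"] ub dpos unfolding R_def by simp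
  have finR: "finite R" unfolding R_def
    by (rule finite_subset[of _ "{m::int. u a - \<delta> - 1 < real_of_int m \<and> real_of_int m \<le> u b + \<delta>}"])
       (auto intro: finite_int_set_interval)
  have fiber: "real (card {t\<in>S. nm t = m}) \<le> 2*\<delta>/\<gamma> + 1" for m
  proof (cases "{t\<in>S. nm t = m} = {}")
    case True
    have "0 \<le> 2*\<delta>/\<gamma>" using dpos gpos by simp
    then show ?thesis unfolding True by simp
  next
    case False
    have finF: "finite {t\<in>S. nm t = m}" unfolding S_def by (rule finite_subset[of _ "{a..b}"]) auto
    define s0 where "s0 = Min {t\<in>S. nm t = m}"
    have s0: "s0 \<in> {t\<in>S. nm t = m}" using Min_in[OF finF False] s0_def by simp
    have sub: "{t\<in>S. nm t = m} \<subseteq> {s0..s0 + \<lfloor>2*\<delta>/\<gamma>\<rfloor>}"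
    proof
      fix t assume t: "t \<in> {t\<in>S. nm t = m}"
      have "s0 \<le> t" using t finF s0_def by simp
      moreover have "t \<le> s0 + \<lfloor>2*\<delta>/\<gamma>\<rfloor>"
      proof -
        have tab: "t \<in> {a..b}" "s0 \<in> {a..b}" using t s0 unfolding S_def by auto
        have "u s0 + \<gamma> * real_of_int (t - s0) \<le> u t"
          using gm[of s0 t] tab \<open>s0 \<le> t\<close> by auto
        moreover have "\<bar>u t - real_of_int m\<bar> \<le> \<delta>" "\<bar>u s0 - real_of_int m\<bar> \<le> \<delta>"
          using nm[of t] nm[of s0] t s0 by auto
        ultimately have "\<gamma> * real_of_int (t - s0) \<le> 2*\<delta>" by linarith
        then have "real_of_int (t - s0) \<le> 2*\<delta>/\<gamma>" using gpos by (simp add: field_simps)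
        then have "t - s0 \<le> \<lfloor>2*\<delta>/\<gamma>\<rfloor>" by (simp add: le_floor_iff)
        then show ?thesis by simp
      qed
      ultimately show "t \<in> {s0..s0 + \<lfloor>2*\<delta>/\<gamma>\<rfloor>}" by simp
    qed
    have "card {t\<in>S. nm t = m} \<le> card {s0..s0 + \<lfloor>2*\<delta>/\<gamma>\<rfloor>}" by (rule card_mono[OF _ sub]) simp
    also have "card {s0..s0 + \<lfloor>2*\<delta>/\<gamma>\<rfloor>} = nat (\<lfloor>2*\<delta>/\<gamma>\<rfloor> + 1)" by simp
    finally have "real (card {t\<in>S. nm t = m}) \<le> real (nat (\<lfloor>2*\<delta>/\<gamma>\<rfloor> + 1))" by linarith
    also have "\<dots> = real_of_int \<lfloor>2*\<delta>/\<gamma>\<rfloor> + 1" using dpos gpos by simp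
    also have "\<dots> \<le> 2*\<delta>/\<gamma> + 1" by simp
    finally show ?thesis .
  qed
  have eqS: "(\<Union>m\<in>nm ` S. {t\<in>S. nm t = m}) = S" by auto
  have finI: "finite (nm ` S)" using finite_subset[OF img finR] .
  have "card (\<Union>m\<in>nm ` S. {t\<in>S. nm t = m}) \<le> (\<Sum>m\<in>nm ` S. card {t\<in>S. nm t = m})"
    by (rule card_UN_le[OF finI])
  then have "card S \<le> (\<Sum>m\<in>nm ` S. card {t\<in>S. nm t = m})" unfolding eqS .
  then have "real (card S) \<le> (\<Sum>m\<in>nm ` S. real (card {t\<in>S. nm t = m}))"
    by (simp only: of_nat_sum[symmetric] of_nat_le_iff)
  also have "\<dots> \<le> (\<Sum>m\<in>nm ` S. 2*\<delta>/\<gamma> + 1)" by (rule sum_mono) (rule fiber)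
  also have "\<dots> = real (card (nm ` S)) * (2*\<delta>/\<gamma> + 1)" by simp
  also have "\<dots> \<le> real (card R) * (2*\<delta>/\<gamma> + 1)"
    using card_mono[OF finR img] dpos gpos by (intro mult_right_mono) auto
  also have "\<dots> \<le> (u b - u a + 2*\<delta> + 1) * (2*\<delta>/\<gamma> + 1)"
    using cardR dpos gpos by (intro mult_right_mono) auto
  finally show ?thesis unfolding S_def .
qed


definition gg :: "(int \<Rightarrow> complex) \<Rightarrow> real \<Rightarrow> real \<Rightarrow> real \<Rightarrow> real" where
  "gg \<phi> K \<alpha> \<beta> = (1 / K) * norm ((\<Sum>n\<in>{n::int. 0 < n \<and> real_of_int n \<le> K}. \<phi> \<lfloor>real_of_int n * \<alpha> + \<beta>\<rfloor>)
              - complex_of_real (1 / \<alpha>) *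
                (\<Sum>m\<in>{m::int. \<beta> < real_of_int m \<and> real_of_int m \<le> \<beta> + K * \<alpha>}. \<phi> m))"

definition Dfun :: "(int \<Rightarrow> complex) \<Rightarrow> real \<Rightarrow> real \<Rightarrow> real \<Rightarrow> real \<Rightarrow> real" where
  "Dfun \<phi> K p q \<alpha> = (SUP \<beta>\<in>{p <.. q}. gg \<phi> K \<alpha> \<beta>)"

lemma I_avg_eq: "I_avg f f' \<phi> A K = (1 / (f' (2*A) - f' A)) * integral {f' A .. f' (2*A)} (Dfun \<phi> K (f A) (f (2*A)))"
  unfolding I_avg_def Dfun_def gg_def by simp

lemma norm_sum_le_card:
  fixes \<phi> :: "int \<Rightarrow> complex"
  assumes "\<forall>m. norm (\<phi> m) \<le> 1"
  shows "norm (\<Sum>x\<in>S. \<phi> (g x)) \<le> real (card S)"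
proof -
  have "norm (\<Sum>x\<in>S. \<phi> (g x)) \<le> (\<Sum>x\<in>S. norm (\<phi> (g x)))" by (rule norm_sum)
  also have "\<dots> \<le> real (card S) * 1" by (rule sum_bounded_above) (use assms in auto)
  finally show ?thesis by simp
qed

lemma card_nK: "K \<ge> 0 \<Longrightarrow> real (card {n::int. 0 < n \<and> real_of_int n \<le> K}) \<le> K"
  unfolding nK_set by simp

lemma gg_bound:
  assumes K: "K > 0" and a: "\<alpha> > 0" and phi: "\<forall>m. norm (\<phi> m) \<le> 1"
  shows "0 \<le> gg \<phi> K \<alpha> \<beta>" "gg \<phi> K \<alpha> \<beta> \<le> 2 + 1/(K*\<alpha>)"
proof -
  show "0 \<le> gg \<phi> K \<alpha> \<beta>" unfolding gg_def using K by simp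
  let ?X = "(\<Sum>n\<in>{n::int. 0 < n \<and> real_of_int n \<le> K}. \<phi> \<lfloor>real_of_int n * \<alpha> + \<beta>\<rfloor>)"
  let ?Y = "(\<Sum>m\<in>{m::int. \<beta> < real_of_int m \<and> real_of_int m \<le> \<beta> + K * \<alpha>}. \<phi> m)"
  have nX: "norm ?X \<le> K"
    using norm_sum_le_card[OF phi, of "\<lambda>n. \<lfloor>real_of_int n * \<alpha> + \<beta>\<rfloor>" "{n::int. 0 < n \<and> real_of_int n \<le> K}"]
      card_nK[of K] K by linarith
  have nY: "norm ?Y \<le> K*\<alpha> + 1"
    using norm_sum_le_card[OF phi, of "\<lambda>x. x" "{m::int. \<beta> < real_of_int m \<and> real_of_int m \<le> \<beta> + K * \<alpha>}"]
      card_int_set_interval[of \<beta> "\<beta> + K*\<alpha>"] K a by simp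
  have "norm (?X - complex_of_real (1/\<alpha>) * ?Y) \<le> norm ?X + norm (complex_of_real (1/\<alpha>) * ?Y)"
    by (rule norm_triangle_ineq4)
  also have "norm (complex_of_real (1/\<alpha>) * ?Y) = (1/\<alpha>) * norm ?Y" using a by (simp only: norm_mult norm_of_real) simp
  also have "(1/\<alpha>) * norm ?Y \<le> (1/\<alpha>) * (K*\<alpha> + 1)" using nY a by (intro mult_left_mono) auto
  also have "(1/\<alpha>) * (K*\<alpha> + 1) = K + 1/\<alpha>" using a by (simp add: field_simps)
  finally have "norm (?X - complex_of_real (1/\<alpha>) * ?Y) \<le> 2*K + 1/\<alpha>" using nX by linarith
  then have "(1/K) * norm (?X - complex_of_real (1/\<alpha>) * ?Y) \<le> (1/K) * (2*K + 1/\<alpha>)"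
    using K by (intro mult_left_mono) auto
  also have "(1/K) * (2*K + 1/\<alpha>) = 2 + 1/(K*\<alpha>)" using K by (simp add: field_simps)
  finally show "gg \<phi> K \<alpha> \<beta> \<le> 2 + 1/(K*\<alpha>)" unfolding gg_def .
qed

lemma gg_bdd:
  assumes K: "K > 0" and a: "\<alpha> > 0" and phi: "\<forall>m. norm (\<phi> m) \<le> 1"
  shows "bdd_above ((\<lambda>\<beta>. gg \<phi> K \<alpha> \<beta>) ` S)"
  using gg_bound(2)[OF K a phi] by (intro bdd_aboveI2) 

lemma Dfun_ge:
  assumes K: "K > 0" and a: "\<alpha> > 0" and phi: "\<forall>m. norm (\<phi> m) \<le> 1" and b: "p < \<beta>" "\<beta> \<le> q"
  shows "gg \<phi> K \<alpha> \<beta> \<le> Dfun \<phi> K p q \<alpha>"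
  unfolding Dfun_def using b by (intro cSUP_upper gg_bdd[OF K a phi]) auto

lemma Dfun_le:
  assumes K: "K > 0" and a: "\<alpha> > 0" and phi: "\<forall>m. norm (\<phi> m) \<le> 1" and pq: "p < q"
  shows "Dfun \<phi> K p q \<alpha> \<le> 2 + 1/(K*\<alpha>)"
  unfolding Dfun_def using pq by (intro cSUP_least gg_bound(2)[OF K a phi]) auto

lemma Dfun_nonneg:
  assumes K: "K > 0" and a: "\<alpha> > 0" and phi: "\<forall>m. norm (\<phi> m) \<le> 1" and pq: "p < q"
  shows "0 \<le> Dfun \<phi> K p q \<alpha>"
  using gg_bound(1)[OF K a phi, of q] Dfun_ge[OF K a phi pq order_refl] by linarith


lemma gg_compare:
  assumes K: "K \<ge> 1" and a0: "\<alpha>0 > 0" and aa: "\<alpha>0 \<le> \<alpha>" "\<alpha> \<le> \<alpha>0 + \<eta>"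
    and phi: "\<forall>m. norm (\<phi> m) \<le> 1"
  shows "gg \<phi> K \<alpha>0 \<beta> \<le> gg \<phi> K \<alpha> \<beta> + (2/K)*(1 + real(card {d\<in>{1..\<lfloor>K\<rfloor>}. nearZ (real_of_int d*\<alpha>0) (K*\<eta>)}))
            + 2*\<eta>/\<alpha>0 + \<eta>/\<alpha>0^2 + 1/(K*\<alpha>0)"
proof -
  have eta: "\<eta> \<ge> 0" using aa by linarith
  have apos: "\<alpha> > 0" using a0 aa by linarith
  have Kpos: "K > 0" using K by linarith
  define N where "N = {n::int. 0 < n \<and> real_of_int n \<le> K}"
  define X0 where "X0 = (\<Sum>n\<in>N. \<phi> \<lfloor>real_of_int n * \<alpha>0 + \<beta>\<rfloor>)"
  define X where "X = (\<Sum>n\<in>N. \<phi> \<lfloor>real_of_int n * \<alpha> + \<beta>\<rfloor>)"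
  define S0 where "S0 = {m::int. \<beta> < real_of_int m \<and> real_of_int m \<le> \<beta> + K * \<alpha>0}"
  define S1 where "S1 = {m::int. \<beta> < real_of_int m \<and> real_of_int m \<le> \<beta> + K * \<alpha>}"
  define S2 where "S2 = {m::int. \<beta> + K * \<alpha>0 < real_of_int m \<and> real_of_int m \<le> \<beta> + K * \<alpha>}"
  define Y0 where "Y0 = complex_of_real (1/\<alpha>0) * (\<Sum>m\<in>S0. \<phi> m)"
  define Y where "Y = complex_of_real (1/\<alpha>) * (\<Sum>m\<in>S1. \<phi> m)"
  define near where "near = real(card {d\<in>{1..\<lfloor>K\<rfloor>}. nearZ (real_of_int d*\<alpha>0) (K*\<eta>)})"
  have g0: "gg \<phi> K \<alpha>0 \<beta> = (1/K) * norm (X0 - Y0)" unfolding gg_def X0_def Y0_def N_def S0_def by simp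
  have g1: "gg \<phi> K \<alpha> \<beta> = (1/K) * norm (X - Y)" unfolding gg_def X_def Y_def N_def S1_def by simp
  have KA: "K*\<alpha>0 \<le> K*\<alpha>" using aa Kpos by simp
  have split: "(\<Sum>m\<in>S1. \<phi> m) = (\<Sum>m\<in>S0. \<phi> m) + (\<Sum>m\<in>S2. \<phi> m)"
    unfolding S0_def S1_def S2_def using KA a0 Kpos
    by (intro split_int_interval_sum) (auto intro: mult_nonneg_nonneg)
  have "Y0 - Y = complex_of_real (1/\<alpha>0 - 1/\<alpha>) * (\<Sum>m\<in>S0. \<phi> m) - complex_of_real (1/\<alpha>) * (\<Sum>m\<in>S2. \<phi> m)"
    unfolding Y0_def Y_def split by (simp add: algebra_simps)
  then have "norm (Y0 - Y) \<le> norm (complex_of_real (1/\<alpha>0 - 1/\<alpha>) * (\<Sum>m\<in>S0. \<phi> m)) + norm (complex_of_real (1/\<alpha>) * (\<Sum>m\<in>S2. \<phi> m))"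
    by (simp add: norm_triangle_ineq4)
  also have "\<dots> = \<bar>1/\<alpha>0 - 1/\<alpha>\<bar> * norm (\<Sum>m\<in>S0. \<phi> m) + (1/\<alpha>) * norm (\<Sum>m\<in>S2. \<phi> m)"
    using apos by (simp only: norm_mult norm_of_real) simp
  also have "\<dots> \<le> (\<eta>/\<alpha>0^2) * (K*\<alpha>0 + 1) + (1/\<alpha>0) * (K*\<eta> + 1)"
  proof (rule add_mono)
    have "\<bar>1/\<alpha>0 - 1/\<alpha>\<bar> = (\<alpha> - \<alpha>0)/(\<alpha>0*\<alpha>)" using a0 apos aa by (simp add: field_simps)
    also have "\<dots> \<le> \<eta>/(\<alpha>0*\<alpha>0)" using a0 apos aa eta
      by (intro frac_le mult_mono) auto
    finally have c1: "\<bar>1/\<alpha>0 - 1/\<alpha>\<bar> \<le> \<eta>/\<alpha>0^2" by (simp add: power2_eq_square)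
    have c2: "norm (\<Sum>m\<in>S0. \<phi> m) \<le> K*\<alpha>0 + 1"
      using norm_sum_le_card[OF phi, of "\<lambda>x. x" S0] card_int_set_interval[of \<beta> "\<beta> + K*\<alpha>0"] Kpos a0
      unfolding S0_def by simp
    show "\<bar>1/\<alpha>0 - 1/\<alpha>\<bar> * norm (\<Sum>m\<in>S0. \<phi> m) \<le> (\<eta>/\<alpha>0^2) * (K*\<alpha>0 + 1)"
      using c1 c2 by (intro mult_mono) auto
    have c3: "norm (\<Sum>m\<in>S2. \<phi> m) \<le> K*\<eta> + 1"
    proof -
      have "real (card S2) \<le> (\<beta> + K*\<alpha>) - (\<beta> + K*\<alpha>0) + 1"
        unfolding S2_def by (rule card_int_set_interval) (use KA in simp)
      moreover have "norm (\<Sum>m\<in>S2. \<phi> m) \<le> real (card S2)"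
        using norm_sum_le_card[OF phi, of "\<lambda>x. x" S2] by simp
      moreover have "K*\<alpha> - K*\<alpha>0 \<le> K*\<eta>"
        using mult_left_mono[of "\<alpha> - \<alpha>0" \<eta> K] aa Kpos by (simp add: right_diff_distrib)
      ultimately have "norm (\<Sum>m\<in>S2. \<phi> m) \<le> K*\<eta> + 1" by linarith
      then show ?thesis .
    qed
    have c4: "1/\<alpha> \<le> 1/\<alpha>0" using a0 aa by (simp add: frac_le)
    show "(1/\<alpha>) * norm (\<Sum>m\<in>S2. \<phi> m) \<le> (1/\<alpha>0) * (K*\<eta> + 1)"
      using c3 c4 apos a0 by (intro mult_mono) auto
  qed
  also have "\<dots> = 2*K*\<eta>/\<alpha>0 + \<eta>/\<alpha>0^2 + 1/\<alpha>0" using a0 by (simp add: field_simps power2_eq_square)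
  finally have nY: "norm (Y0 - Y) \<le> 2*K*\<eta>/\<alpha>0 + \<eta>/\<alpha>0^2 + 1/\<alpha>0" .
  define Bad where "Bad = {n\<in>N. \<lfloor>real_of_int n * \<alpha>0 + \<beta>\<rfloor> \<noteq> \<lfloor>real_of_int n * \<alpha> + \<beta>\<rfloor>}"
  have finN: "finite N" unfolding N_def nK_set by simp
  have nX: "norm (X0 - X) \<le> 2 * real (card Bad)"
    unfolding X0_def X_def Bad_def by (rule sum_phi_diff[OF finN]) (use phi in auto)
  have "card Bad \<le> 1 + card {d\<in>{1..\<lfloor>K\<rfloor>}. nearZ (real_of_int d*\<alpha>0) (K*\<eta>)}"
  proof (rule mismatch_card)
    show "Bad \<subseteq> {1..\<lfloor>K\<rfloor>}" unfolding Bad_def N_def nK_set by auto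
    fix h assume h: "h \<in> Bad"
    then have h1: "1 \<le> h" "real_of_int h \<le> K" unfolding Bad_def N_def by auto
    show "\<exists>m::int. 0 < real_of_int m - (real_of_int h*\<alpha>0+\<beta>) \<and> real_of_int m - (real_of_int h*\<alpha>0+\<beta>) \<le> K*\<eta>"
    proof (rule floor_mismatch)
      show "real_of_int h * \<alpha>0 + \<beta> \<le> real_of_int h * \<alpha> + \<beta>" using h1 aa by (simp add: mult_left_mono)
      have "real_of_int h * (\<alpha> - \<alpha>0) \<le> K * \<eta>" using h1 aa eta by (intro mult_mono) auto
      then show "real_of_int h * \<alpha> + \<beta> \<le> real_of_int h * \<alpha>0 + \<beta> + K * \<eta>" by (simp add: algebra_simps)
      show "\<lfloor>real_of_int h * \<alpha>0 + \<beta>\<rfloor> \<noteq> \<lfloor>real_of_int h * \<alpha> + \<beta>\<rfloor>" using h unfolding Bad_def by auto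
    qed
  qed
  then have cB: "real (card Bad) \<le> 1 + near" unfolding near_def by linarith
  have "norm (X0 - Y0) \<le> norm (X - Y) + norm (X0 - X) + norm (Y0 - Y)"
    using norm_triangle_ineq[of "X - Y" "(X0 - X) - (Y0 - Y)"] norm_triangle_ineq4[of "X0 - X" "Y0 - Y"]
    by (simp add: algebra_simps)
  also have "\<dots> \<le> norm (X - Y) + 2*(1 + near) + (2*K*\<eta>/\<alpha>0 + \<eta>/\<alpha>0^2 + 1/\<alpha>0)"
  proof -
    have "norm (X0 - X) \<le> 2*(1 + near)" using order_trans[OF nX mult_left_mono[OF cB]] by simp
    then show ?thesis using nY by (intro add_mono) auto
  qed
  finally have "(1/K) * norm (X0 - Y0) \<le> (1/K) * (norm (X - Y) + 2*(1 + near) + (2*K*\<eta>/\<alpha>0 + \<eta>/\<alpha>0^2 + 1/\<alpha>0))"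
    using Kpos by (intro mult_left_mono) auto
  also have "\<dots> = (1/K) * norm (X - Y) + (2/K)*(1 + near) + 2*\<eta>/\<alpha>0 + (\<eta>/\<alpha>0^2)/K + 1/(K*\<alpha>0)"
    using Kpos by (simp add: field_simps)
  also have "(\<eta>/\<alpha>0^2)/K \<le> \<eta>/\<alpha>0^2"
  proof -
    have x0: "0 \<le> \<eta>/\<alpha>0^2" using eta by simp
    have "(\<eta>/\<alpha>0^2) / K \<le> (\<eta>/\<alpha>0^2) / 1" using divide_left_mono[OF K x0] Kpos by simp
    then show ?thesis by simp
  qed
  finally show ?thesis unfolding g0 g1 near_def by simp
qed

lemma Dfun_compare:
  assumes K: "K \<ge> 1" and a0: "\<alpha>0 > 0" and aa: "\<alpha>0 \<le> \<alpha>" "\<alpha> \<le> \<alpha>0 + \<eta>"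
    and phi: "\<forall>m. norm (\<phi> m) \<le> 1" and pq: "p < q"
  shows "Dfun \<phi> K p q \<alpha>0 \<le> Dfun \<phi> K p q \<alpha> + (2/K)*(1 + real(card {d\<in>{1..\<lfloor>K\<rfloor>}. nearZ (real_of_int d*\<alpha>0) (K*\<eta>)}))
            + 2*\<eta>/\<alpha>0 + \<eta>/\<alpha>0^2 + 1/(K*\<alpha>0)"
proof -
  have Kpos: "K > 0" using K by simp
  have apos: "\<alpha> > 0" using a0 aa by linarith
  show ?thesis unfolding Dfun_def[of _ _ _ _ \<alpha>0]
  proof (rule cSUP_least)
    show "{p<..q} \<noteq> {}" using pq by auto
    fix \<beta> assume "\<beta> \<in> {p<..q}"
    then have "gg \<phi> K \<alpha> \<beta> \<le> Dfun \<phi> K p q \<alpha>" using Dfun_ge[OF Kpos apos phi] by auto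
    then show "gg \<phi> K \<alpha>0 \<beta> \<le> Dfun \<phi> K p q \<alpha> + (2/K)*(1 + real(card {d\<in>{1..\<lfloor>K\<rfloor>}. nearZ (real_of_int d*\<alpha>0) (K*\<eta>)}))
            + 2*\<eta>/\<alpha>0 + \<eta>/\<alpha>0^2 + 1/(K*\<alpha>0)"
      using gg_compare[OF K a0 aa phi, of \<beta>] by linarith
  qed
qed


lemma gg_right_const:
  assumes K: "K > 0"
  shows "\<exists>\<rho>>0. \<forall>\<beta>'. \<beta> \<le> \<beta>' \<and> \<beta>' < \<beta> + \<rho> \<longrightarrow> gg \<phi> K \<alpha> \<beta>' = gg \<phi> K \<alpha> \<beta>"
proof -
  define C where "C = (\<lambda>n. real_of_int n * \<alpha>) ` {1..\<lfloor>K\<rfloor>} \<union> {0, K*\<alpha>}"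
  define \<rho> where "\<rho> = Min ((\<lambda>c. real_of_int \<lfloor>\<beta>+c\<rfloor> + 1 - (\<beta>+c)) ` C)"
  have finC: "finite C" "C \<noteq> {}" unfolding C_def by auto
  have rpos: "\<rho> > 0" unfolding \<rho>_def using finC
    by (subst Min_gr_iff) (auto simp: real_of_int_floor_add_one_gt)
  have fl: "\<lfloor>\<beta>'+c\<rfloor> = \<lfloor>\<beta>+c\<rfloor>" if c: "c \<in> C" and b: "\<beta> \<le> \<beta>'" "\<beta>' < \<beta> + \<rho>" for c \<beta>'
  proof (rule floor_unique)
    show "real_of_int \<lfloor>\<beta>+c\<rfloor> \<le> \<beta>'+c" using b of_int_floor_le[of "\<beta>+c"] by linarith
    have "\<rho> \<le> real_of_int \<lfloor>\<beta>+c\<rfloor> + 1 - (\<beta>+c)" unfolding \<rho>_def using finC c by (intro Min_le) auto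
    then show "\<beta>'+c < real_of_int \<lfloor>\<beta>+c\<rfloor> + 1" using b by linarith
  qed
  show ?thesis
  proof (intro exI[of _ \<rho>] conjI allI impI rpos)
    fix \<beta>' assume b: "\<beta> \<le> \<beta>' \<and> \<beta>' < \<beta> + \<rho>"
    have s1: "(\<Sum>n\<in>{1..\<lfloor>K\<rfloor>}. \<phi> \<lfloor>real_of_int n * \<alpha> + \<beta>'\<rfloor>) = (\<Sum>n\<in>{1..\<lfloor>K\<rfloor>}. \<phi> \<lfloor>real_of_int n * \<alpha> + \<beta>\<rfloor>)"
    proof (rule sum.cong[OF refl])
      fix n assume "n \<in> {1..\<lfloor>K\<rfloor>}"
      then have "real_of_int n * \<alpha> \<in> C" unfolding C_def by auto
      then show "\<phi> \<lfloor>real_of_int n * \<alpha> + \<beta>'\<rfloor> = \<phi> \<lfloor>real_of_int n * \<alpha> + \<beta>\<rfloor>"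
        using fl[of "real_of_int n * \<alpha>" \<beta>'] b by (simp add: add.commute)
    qed
    have "0 \<in> C" "K*\<alpha> \<in> C" unfolding C_def by auto
    then have f0: "\<lfloor>\<beta>'\<rfloor> = \<lfloor>\<beta>\<rfloor>" and f1: "\<lfloor>\<beta>' + K*\<alpha>\<rfloor> = \<lfloor>\<beta> + K*\<alpha>\<rfloor>"
      using fl[of 0 \<beta>'] fl[of "K*\<alpha>" \<beta>'] b by auto
    show "gg \<phi> K \<alpha> \<beta>' = gg \<phi> K \<alpha> \<beta>"
      unfolding gg_def nK_set int_set_interval s1 f0 f1 ..
  qed
qed

definition Qset :: "real \<Rightarrow> real \<Rightarrow> real set" where
  "Qset p q = (\<rat> \<inter> {p<..<q}) \<union> {q}"

lemma Qset_sub: "p < q \<Longrightarrow> Qset p q \<subseteq> {p<..q}"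
  unfolding Qset_def by auto

lemma countable_Qset: "countable (Qset p q)"
  unfolding Qset_def by (intro countable_Un countable_Int1 countable_rat) simp

lemma Dfun_eq_Q:
  assumes K: "K > 0" and a: "\<alpha> > 0" and phi: "\<forall>m. norm (\<phi> m) \<le> 1" and pq: "p < q"
  shows "Dfun \<phi> K p q \<alpha> = (SUP \<beta>\<in>Qset p q. gg \<phi> K \<alpha> \<beta>)"
proof (rule antisym)
  have ne: "Qset p q \<noteq> {}" unfolding Qset_def by auto
  show "(SUP \<beta>\<in>Qset p q. gg \<phi> K \<alpha> \<beta>) \<le> Dfun \<phi> K p q \<alpha>"
    unfolding Dfun_def by (rule cSUP_subset_mono[OF ne gg_bdd[OF K a phi] Qset_sub[OF pq] order_refl])
  show "Dfun \<phi> K p q \<alpha> \<le> (SUP \<beta>\<in>Qset p q. gg \<phi> K \<alpha> \<beta>)"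
    unfolding Dfun_def
  proof (rule cSUP_least)
    show "{p<..q} \<noteq> {}" using pq by auto
    fix \<beta> assume b: "\<beta> \<in> {p<..q}"
    show "gg \<phi> K \<alpha> \<beta> \<le> (SUP \<beta>\<in>Qset p q. gg \<phi> K \<alpha> \<beta>)"
    proof (cases "\<beta> = q")
      case True
      then show ?thesis unfolding Qset_def by (intro cSUP_upper gg_bdd[OF K a phi]) auto
    next
      case False
      then have bq: "\<beta> < q" using b by auto
      obtain \<rho> where r: "\<rho> > 0" "\<forall>\<beta>'. \<beta> \<le> \<beta>' \<and> \<beta>' < \<beta> + \<rho> \<longrightarrow> gg \<phi> K \<alpha> \<beta>' = gg \<phi> K \<alpha> \<beta>"
        using gg_right_const[OF K, of \<beta> \<phi> \<alpha>] by (elim exE conjE) (rule that)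
      obtain r' where r': "r' \<in> \<rat>" "\<beta> < r'" "r' < min (\<beta>+\<rho>) q"
        using Rats_dense_in_real[of \<beta> "min (\<beta>+\<rho>) q"] r(1) bq by auto
      have "gg \<phi> K \<alpha> r' = gg \<phi> K \<alpha> \<beta>" using r(2)[rule_format, of r'] r' by simp
      moreover have "r' \<in> Qset p q" unfolding Qset_def using r' b by simp
      moreover note cSUP_upper[OF \<open>r' \<in> Qset p q\<close> gg_bdd[OF K a phi]]
      ultimately show ?thesis by simp
    qed
  qed
qed

definition gg2 :: "(int \<Rightarrow> complex) \<Rightarrow> real \<Rightarrow> int set \<Rightarrow> real \<Rightarrow> real \<Rightarrow> real" where
  "gg2 \<phi> K R0 \<alpha> \<beta> = (1 / K) * norm ((\<Sum>n\<in>{1..\<lfloor>K\<rfloor>}. \<phi> \<lfloor>real_of_int n * \<alpha> + \<beta>\<rfloor>)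
              - complex_of_real (1 / \<alpha>) *
                (\<Sum>m\<in>R0. if \<beta> < real_of_int m \<and> real_of_int m \<le> \<beta> + K * \<alpha> then \<phi> m else 0))"

lemma phi_floor_meas:
  fixes \<phi> :: "int \<Rightarrow> complex" and g :: "real \<Rightarrow> real"
  assumes "g \<in> borel_measurable borel"
  shows "(\<lambda>\<alpha>. \<phi> \<lfloor>g \<alpha>\<rfloor>) \<in> borel_measurable borel"
proof -
  have "(\<lambda>\<alpha>. \<lfloor>g \<alpha>\<rfloor>) \<in> measurable borel (count_space UNIV)"
    using measurable_compose[OF assms measurable_real_floor] by (simp add: comp_def)
  moreover have "\<phi> \<in> measurable (count_space UNIV) borel" by simp
  ultimately show ?thesis using measurable_compose by blast
qed

lemma if_meas:
  fixes c :: complex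
  shows "(\<lambda>\<alpha>::real. if \<beta> < x \<and> x \<le> \<beta> + K * \<alpha> then c else 0) \<in> borel_measurable borel"
proof (rule measurable_If)
  show "{\<alpha>::real \<in> space borel. \<beta> < x \<and> x \<le> \<beta> + K * \<alpha>} \<in> sets borel"
    by measurable
qed auto

lemma gg2_meas: "(\<lambda>\<alpha>. gg2 \<phi> K R0 \<alpha> \<beta>) \<in> borel_measurable borel"
proof -
  have m1: "(\<lambda>\<alpha>. \<Sum>n\<in>{1..\<lfloor>K\<rfloor>}. \<phi> \<lfloor>real_of_int n * \<alpha> + \<beta>\<rfloor>) \<in> borel_measurable borel"
  proof (rule borel_measurable_sum)
    fix n :: int
    have "(\<lambda>\<alpha>::real. real_of_int n * \<alpha> + \<beta>) \<in> borel_measurable borel"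
      by (rule borel_measurable_continuous_onI) (intro continuous_intros)
    then show "(\<lambda>\<alpha>. \<phi> \<lfloor>real_of_int n * \<alpha> + \<beta>\<rfloor>) \<in> borel_measurable borel" by (rule phi_floor_meas)
  qed
  have m2: "(\<lambda>\<alpha>. \<Sum>m\<in>R0. if \<beta> < real_of_int m \<and> real_of_int m \<le> \<beta> + K * \<alpha> then \<phi> m else 0) \<in> borel_measurable borel"
    by (intro borel_measurable_sum if_meas)
  have m0: "(\<lambda>\<alpha>::real. 1 / \<alpha>) \<in> borel_measurable borel"
    by (rule borel_measurable_divide) (auto intro: measurable_ident_sets)
  have m3: "(\<lambda>\<alpha>. complex_of_real (1 / \<alpha>)) \<in> borel_measurable borel"
    using measurable_compose[OF m0 borel_measurable_of_real] .
  have m4: "(\<lambda>\<alpha>. (\<Sum>n\<in>{1..\<lfloor>K\<rfloor>}. \<phi> \<lfloor>real_of_int n * \<alpha> + \<beta>\<rfloor>) - complex_of_real (1 / \<alpha>) *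
                (\<Sum>m\<in>R0. if \<beta> < real_of_int m \<and> real_of_int m \<le> \<beta> + K * \<alpha> then \<phi> m else 0)) \<in> borel_measurable borel"
    by (rule borel_measurable_diff[OF m1 borel_measurable_times[OF m3 m2]])
  note m5 = measurable_compose[OF m4 borel_measurable_norm]
  show ?thesis unfolding gg2_def
    by (rule borel_measurable_times[OF borel_measurable_const m5])
qed


lemma gg2_bound:
  assumes K: "K > 0" and phi: "\<forall>m. norm (\<phi> m) \<le> 1"
  shows "gg2 \<phi> K R0 \<alpha> \<beta> \<le> (1/K) * (real (card {1..\<lfloor>K\<rfloor>}) + \<bar>1/\<alpha>\<bar> * real (card R0))"
proof -
  let ?X = "(\<Sum>n\<in>{1..\<lfloor>K\<rfloor>}. \<phi> \<lfloor>real_of_int n * \<alpha> + \<beta>\<rfloor>)"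
  let ?Y = "(\<Sum>m\<in>R0. if \<beta> < real_of_int m \<and> real_of_int m \<le> \<beta> + K * \<alpha> then \<phi> m else 0)"
  have nX: "norm ?X \<le> real (card {1..\<lfloor>K\<rfloor>})" by (rule norm_sum_le_card[OF phi])
  have "norm ?Y \<le> (\<Sum>m\<in>R0. norm (if \<beta> < real_of_int m \<and> real_of_int m \<le> \<beta> + K * \<alpha> then \<phi> m else 0))"
    by (rule norm_sum)
  also have "\<dots> \<le> real (card R0) * 1" by (rule sum_bounded_above) (use phi in auto)
  finally have nY: "norm ?Y \<le> real (card R0)" by simp
  have "norm (?X - complex_of_real (1/\<alpha>) * ?Y) \<le> norm ?X + norm (complex_of_real (1/\<alpha>) * ?Y)"
    by (rule norm_triangle_ineq4)
  also have "norm (complex_of_real (1/\<alpha>) * ?Y) = \<bar>1/\<alpha>\<bar> * norm ?Y" by (simp only: norm_mult norm_of_real)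
  also have "\<bar>1/\<alpha>\<bar> * norm ?Y \<le> \<bar>1/\<alpha>\<bar> * real (card R0)" using nY by (intro mult_left_mono) auto
  finally have "norm (?X - complex_of_real (1/\<alpha>) * ?Y) \<le> real (card {1..\<lfloor>K\<rfloor>}) + \<bar>1/\<alpha>\<bar> * real (card R0)"
    using nX by linarith
  then show ?thesis unfolding gg2_def using K by (intro mult_left_mono) auto
qed

lemma gg2_eq:
  assumes K: "K > 0" and a: "0 < \<alpha>" "\<alpha> \<le> \<alpha>h" and b: "p < \<beta>" "\<beta> \<le> q"
  shows "gg2 \<phi> K {m::int. p < real_of_int m \<and> real_of_int m \<le> q + K*\<alpha>h} \<alpha> \<beta> = gg \<phi> K \<alpha> \<beta>"
proof -
  let ?R0 = "{m::int. p < real_of_int m \<and> real_of_int m \<le> q + K*\<alpha>h}"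
  have fin: "finite ?R0" by (rule finite_int_set_interval)
  have KA: "K*\<alpha> \<le> K*\<alpha>h" using K a by simp
  have "{m \<in> ?R0. \<beta> < real_of_int m \<and> real_of_int m \<le> \<beta> + K * \<alpha>} = {m::int. \<beta> < real_of_int m \<and> real_of_int m \<le> \<beta> + K * \<alpha>}"
    using b KA by auto
  then have "(\<Sum>m\<in>?R0. if \<beta> < real_of_int m \<and> real_of_int m \<le> \<beta> + K * \<alpha> then \<phi> m else 0) =
             (\<Sum>m\<in>{m::int. \<beta> < real_of_int m \<and> real_of_int m \<le> \<beta> + K * \<alpha>}. \<phi> m)"
    using sum.inter_filter[OF fin, of \<phi> "\<lambda>m. \<beta> < real_of_int m \<and> real_of_int m \<le> \<beta> + K * \<alpha>"] by simp
  then show ?thesis unfolding gg2_def gg_def nK_set by simp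
qed

lemma Dfun_integrable:
  assumes K: "K > 0" and al: "\<alpha>l > 0" "\<alpha>l \<le> \<alpha>h" and phi: "\<forall>m. norm (\<phi> m) \<le> 1" and pq: "p < q"
  shows "Dfun \<phi> K p q integrable_on {\<alpha>l..\<alpha>h}"
proof -
  define R0 where "R0 = {m::int. p < real_of_int m \<and> real_of_int m \<le> q + K*\<alpha>h}"
  define G where "G \<alpha> = (SUP \<beta>\<in>Qset p q. gg2 \<phi> K R0 \<alpha> \<beta>)" for \<alpha>
  have eq: "Dfun \<phi> K p q \<alpha> = G \<alpha>" if "\<alpha> \<in> {\<alpha>l..\<alpha>h}" for \<alpha>
  proof -
    have a: "0 < \<alpha>" "\<alpha> \<le> \<alpha>h" using that al by auto
    have "Dfun \<phi> K p q \<alpha> = (SUP \<beta>\<in>Qset p q. gg \<phi> K \<alpha> \<beta>)" by (rule Dfun_eq_Q[OF K a(1) phi pq])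
    also have "\<dots> = G \<alpha>" unfolding G_def R0_def
    proof (rule SUP_cong[OF refl])
      fix \<beta> assume "\<beta> \<in> Qset p q"
      then have "p < \<beta>" "\<beta> \<le> q" using Qset_sub[OF pq] by auto
      then show "gg \<phi> K \<alpha> \<beta> = gg2 \<phi> K {m::int. p < real_of_int m \<and> real_of_int m \<le> q + K*\<alpha>h} \<alpha> \<beta>"
        using gg2_eq[OF K a] by simp
    qed
    finally show ?thesis .
  qed
  have Gm: "G \<in> borel_measurable borel" unfolding G_def
  proof (rule borel_measurable_cSUP[OF countable_Qset gg2_meas])
    fix \<alpha> :: real
    show "bdd_above ((\<lambda>\<beta>. gg2 \<phi> K R0 \<alpha> \<beta>) ` Qset p q)"
      by (rule bdd_aboveI2[OF gg2_bound[OF K phi]])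
  qed
  have GmS: "G \<in> borel_measurable (lebesgue_on {\<alpha>l..\<alpha>h})"
    using measurable_comp[OF id_borel_measurable_lebesgue_on Gm] by (simp add: comp_def)
  define Bd where "Bd = 2 + 1/(K*\<alpha>l)"
  have bnd: "\<bar>G \<alpha>\<bar> \<le> Bd" if "\<alpha> \<in> {\<alpha>l..\<alpha>h}" for \<alpha>
  proof -
    have a: "0 < \<alpha>" "\<alpha>l \<le> \<alpha>" using that al by auto
    have "0 \<le> Dfun \<phi> K p q \<alpha>" by (rule Dfun_nonneg[OF K a(1) phi pq])
    moreover have "Dfun \<phi> K p q \<alpha> \<le> 2 + 1/(K*\<alpha>)" by (rule Dfun_le[OF K a(1) phi pq])
    moreover have "1/(K*\<alpha>) \<le> 1/(K*\<alpha>l)" using K a al by (intro divide_left_mono mult_left_mono) auto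
    ultimately show ?thesis using eq[OF that] unfolding Bd_def by linarith
  qed
  have "G integrable_on {\<alpha>l..\<alpha>h}"
    by (rule measurable_bounded_by_integrable_imp_integrable_real[OF GmS integrable_const_ivl bnd]) auto
  then show ?thesis by (rule integrable_eq) (use eq in auto)
qed


locale fset =
  fixes f f' f'' :: "real \<Rightarrow> real" and c1 c2 :: real
  assumes df: "\<And>x. x > 0 \<Longrightarrow> (f has_real_derivative f' x) (at x)"
    and df': "\<And>x. x > 0 \<Longrightarrow> (f' has_real_derivative f'' x) (at x)"
    and f'pos: "\<And>x. x > 0 \<Longrightarrow> f' x > 0"
    and f''pos: "\<And>x. x > 0 \<Longrightarrow> f'' x > 0"
    and c1: "c1 \<ge> 1/2" and c2: "c2 > 0"
    and doubling: "\<And>x y. 0 < x \<Longrightarrow> x \<le> y \<Longrightarrow> y \<le> 2*x \<Longrightarrow>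
                     c1 * f'' x \<le> f'' y \<and> f'' y \<le> c2 * f'' x"
begin

lemma c1_le1: "c1 \<le> 1"
  using doubling[of 1 1] f''pos[of 1] by simp

lemma c2_ge1: "c2 \<ge> 1"
  using doubling[of 1 1] f''pos[of 1] by simp

lemma mvt_bounds:
  fixes g g' :: "real \<Rightarrow> real"
  assumes der: "\<And>z. z > 0 \<Longrightarrow> (g has_real_derivative g' z) (at z)"
    and x: "0 < x" "x \<le> y" and LU: "\<And>z. x \<le> z \<Longrightarrow> z \<le> y \<Longrightarrow> L \<le> g' z \<and> g' z \<le> U"
  shows "L*(y-x) \<le> g y - g x \<and> g y - g x \<le> U*(y-x)"
proof (cases "x = y")
  case True then show ?thesis by simp
next
  case False
  then have xy: "x < y" using x by simp
  obtain z where z: "x < z" "z < y" "g y - g x = (y - x) * g' z"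
    using MVT2[OF xy, of g g'] der x by force
  have "L \<le> g' z" "g' z \<le> U" using LU[of z] z by auto
  then show ?thesis using z(3) xy by (simp add: mult.commute mult_right_mono)
qed

lemma f'_diff: "0 < x \<Longrightarrow> x \<le> y \<Longrightarrow> (\<And>z. x \<le> z \<Longrightarrow> z \<le> y \<Longrightarrow> L \<le> f'' z \<and> f'' z \<le> U) \<Longrightarrow>
   L*(y-x) \<le> f' y - f' x \<and> f' y - f' x \<le> U*(y-x)"
  by (rule mvt_bounds[OF df'])

lemma f_diff: "0 < x \<Longrightarrow> x \<le> y \<Longrightarrow> (\<And>z. x \<le> z \<Longrightarrow> z \<le> y \<Longrightarrow> L \<le> f' z \<and> f' z \<le> U) \<Longrightarrow>
   L*(y-x) \<le> f y - f x \<and> f y - f x \<le> U*(y-x)"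
  by (rule mvt_bounds[OF df])

lemma f'_strict: assumes "0 < x" "x < y" shows "f' x < f' y"
proof -
  obtain z where z: "x < z" "z < y" "f' y - f' x = (y - x) * f'' z"
    using MVT2[OF assms(2), of f' f''] df' assms by force
  have "(y - x) * f'' z > 0" using f''pos[of z] z assms by (intro mult_pos_pos) auto
  then show ?thesis using z(3) by linarith
qed

lemma f'_mono: "0 < x \<Longrightarrow> x \<le> y \<Longrightarrow> f' x \<le> f' y"
  using f'_strict by (cases "x = y") (auto intro: less_imp_le)

lemma f_strict: assumes "0 < x" "x < y" shows "f x < f y"
proof -
  obtain z where z: "x < z" "z < y" "f y - f x = (y - x) * f' z"
    using MVT2[OF assms(2), of f f'] df assms by force
  have "(y - x) * f' z > 0" using f'pos[of z] z assms by (intro mult_pos_pos) auto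
  then show ?thesis using z(3) by linarith
qed

lemma f_mono: "0 < x \<Longrightarrow> x \<le> y \<Longrightarrow> f x \<le> f y"
  using f_strict by (cases "x = y") (auto intro: less_imp_le)

lemma f''_lower_aux: "\<forall>x. 1 \<le> x \<and> x \<le> 2^n \<longrightarrow> c1 * f'' 1 \<le> x * f'' x"
proof (induction n)
  case 0
  show ?case using c1_le1 f''pos[of 1] by (auto simp: mult_right_mono)
next
  case (Suc n)
  show ?case
  proof (intro allI impI)
    fix x :: real assume x: "1 \<le> x \<and> x \<le> 2^Suc n"
    show "c1 * f'' 1 \<le> x * f'' x"
    proof (cases "x \<le> 2")
      case True
      have "c1 * f'' 1 \<le> f'' x" using doubling[of 1 x] x True by simp
      also have "f'' x \<le> x * f'' x" using x f''pos[of x] by (simp add: mult_le_cancel_right1)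
      finally show ?thesis .
    next
      case False
      have h: "1 \<le> x/2 \<and> x/2 \<le> 2^n" using x False by auto
      have "c1 * f'' 1 \<le> (x/2) * f'' (x/2)" using Suc.IH h by blast
      also have "f'' (x/2) \<le> 2 * f'' x"
      proof -
        have "c1 * f'' (x/2) \<le> f'' x" using doubling[of "x/2" x] x by simp
        moreover have "(1/2) * f'' (x/2) \<le> c1 * f'' (x/2)" using c1 f''pos[of "x/2"] x
          by (intro mult_right_mono) auto
        ultimately show ?thesis by linarith
      qed
      then have "(x/2) * f'' (x/2) \<le> (x/2) * (2 * f'' x)" using x by (intro mult_left_mono) auto
      finally show ?thesis by simp
    qed
  qed
qed

definition m0 where "m0 = c1 * f'' 1"

lemma m0_pos: "m0 > 0" unfolding m0_def using c1 f''pos[of 1] by simp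

lemma f''_lower: assumes "1 \<le> x" shows "m0 \<le> x * f'' x"
proof -
  obtain n where "x < 2^n" using real_arch_pow[of 2 x] by auto
  then show ?thesis using f''_lower_aux[of n] assms unfolding m0_def by auto
qed

lemma f''_window:
  assumes A: "0 < A" and y: "A \<le> y" "y \<le> 4*A"
  shows "c1^2 * f'' A \<le> f'' y \<and> f'' y \<le> c2^2 * f'' A"
proof (cases "y \<le> 2*A")
  case True
  have d: "c1 * f'' A \<le> f'' y \<and> f'' y \<le> c2 * f'' A" using doubling[of A y] A y True by simp
  have "c1^2 * f'' A \<le> c1 * f'' A" using c1 c1_le1 f''pos[OF A] by (simp add: power2_eq_square mult_le_cancel_right1)
  moreover have "c2 * f'' A \<le> c2^2 * f'' A" using c2_ge1 f''pos[OF A] by (simp add: power2_eq_square mult_le_cancel_right1)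
  ultimately show ?thesis using d by linarith
next
  case False
  have d1: "c1 * f'' A \<le> f'' (2*A) \<and> f'' (2*A) \<le> c2 * f'' A" using doubling[of A "2*A"] A by simp
  have d2: "c1 * f'' (2*A) \<le> f'' y \<and> f'' y \<le> c2 * f'' (2*A)" using doubling[of "2*A" y] A y False by simp
  have "c1^2 * f'' A = c1 * (c1 * f'' A)" by (simp add: power2_eq_square)
  also have "\<dots> \<le> c1 * f'' (2*A)" using d1 c1 by (intro mult_left_mono) auto
  also have "\<dots> \<le> f'' y" using d2 by simp
  finally have l: "c1^2 * f'' A \<le> f'' y" .
  have "f'' y \<le> c2 * f'' (2*A)" using d2 by simp
  also have "\<dots> \<le> c2 * (c2 * f'' A)" using d1 c2 by (intro mult_left_mono) auto
  also have "\<dots> = c2^2 * f'' A" by (simp add: power2_eq_square)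
  finally show ?thesis using l by simp
qed

end

context fset begin

lemma taylor:
  assumes x: "0 < x" "x \<le> y" and U: "\<And>z. x \<le> z \<Longrightarrow> z \<le> y \<Longrightarrow> f'' z \<le> U"
  shows "0 \<le> f y - f x - (y-x) * f' x \<and> f y - f x - (y-x) * f' x \<le> (y-x)^2 * U"
proof -
  have U0: "0 \<le> U" using U[of x] x f''pos[of x] by simp
  have b: "f' x \<le> f' z \<and> f' z \<le> f' x + (y-x)*U" if z: "x \<le> z" "z \<le> y" for z
  proof -
    have "0*(z-x) \<le> f' z - f' x \<and> f' z - f' x \<le> U*(z-x)"
      using f'_diff[of x z 0 U] x z U f''pos by (smt (verit, best))
    moreover have "U*(z-x) \<le> U*(y-x)" using z U0 by (intro mult_left_mono) auto
    ultimately show ?thesis by (simp add: algebra_simps)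
  qed
  have "f' x * (y-x) \<le> f y - f x \<and> f y - f x \<le> (f' x + (y-x)*U) * (y-x)"
    by (rule f_diff[OF x]) (use b in auto)
  then show ?thesis by (simp add: algebra_simps power2_eq_square)
qed

lemma f_isCont: "0 < x \<Longrightarrow> isCont f x"
  using df DERIV_isCont by blast

lemma f_inj: "inj_on f {0<..}"
proof (rule inj_onI)
  fix x y assume "x \<in> {0<..}" "y \<in> {0<..}" "f x = f y"
  then show "x = y" using f_strict[of x y] f_strict[of y x] by (cases x y rule: linorder_cases) auto
qed

lemma f_ivt:
  assumes "0 < u" "u \<le> v" "f u \<le> y" "y \<le> f v"
  shows "\<exists>x. u \<le> x \<and> x \<le> v \<and> f x = y"
proof (rule IVT'[OF assms(3,4,2)])
  show "continuous_on {u..v} f" using f_isCont assms(1)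
    by (intro continuous_at_imp_continuous_on) auto
qed

lemma ginv_eq: "0 < x \<Longrightarrow> inv_into {0<..} f (f x) = x"
  using inv_into_f_eq[OF f_inj] by simp

lemma inv_deriv:
  assumes u: "0 < u" "u \<le> v" and m: "f u < m" "m \<le> f v"
  shows "\<exists>x. u < x \<and> x \<le> v \<and> f x = m \<and> deriv (inv_into {0<..} f) m = 1 / f' x"
proof -
  define g where "g = inv_into {0<..} f"
  have "\<exists>x. u \<le> x \<and> x \<le> v \<and> f x = m" using f_ivt[OF u, of m] m by simp
  then obtain x where x: "u \<le> x" "x \<le> v" "f x = m" by blast
  have ux: "u < x" using x m by (cases "u = x") auto
  have xpos: "0 < x" using ux u by simp
  have gm: "g m = x" unfolding g_def using ginv_eq[OF xpos] x by simp
  have "DERIV g m :> inverse (f' x)"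
  proof (rule DERIV_inverse_function[where a="f u" and b="f (v+1)"])
    show "DERIV f (g m) :> f' x" using gm df[OF xpos] by simp
    show "f' x \<noteq> 0" using f'pos[OF xpos] by simp
    show "f u < m" using m by simp
    show "m < f (v+1)" using m f_strict[of v "v+1"] u by simp
    fix y assume y: "f u < y" "y < f (v+1)"
    obtain z where z: "u \<le> z" "z \<le> v+1" "f z = y" using f_ivt[of u "v+1" y] u y by force
    have "g y = z" unfolding g_def using ginv_eq[of z] z u by simp
    then show "f (g y) = y" using z by simp
  next
    have "isCont g (f x)"
    proof (rule isCont_inverse_function[where d="x/2" and f=f and g=g and x=x])
      show "0 < x/2" using xpos by simp
      fix z assume "\<bar>z - x\<bar> \<le> x/2"
      then have zp: "0 < z" using xpos by linarith
      show "g (f z) = z" unfolding g_def using ginv_eq[OF zp] .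
      show "isCont f z" using f_isCont[OF zp] .
    qed
    then show "isCont g m" using x by simp
  qed
  then have "deriv g m = inverse (f' x)" by (rule DERIV_imp_deriv)
  then show ?thesis using ux x unfolding g_def by (intro exI[of _ x]) (simp add: divide_inverse)
qed

end

context fset begin
definition \<theta> where "\<theta> = min 1 m0"
lemma theta_pos: "\<theta> > 0" unfolding \<theta>_def using m0_pos by simp
end

locale mainset = fset +
  fixes A K :: real and \<phi> :: "int \<Rightarrow> complex"
  assumes A2: "A \<ge> 2" and K1: "K \<ge> 1" and phi: "\<forall>m. norm (\<phi> m) \<le> 1"
    and small: "f'' A * K^2 \<le> \<theta>"
begin

definition "\<epsilon> = f'' A"
definition "a = \<lfloor>A\<rfloor>"
definition "b = \<lfloor>2*A\<rfloor>"
definition "k = \<lfloor>K\<rfloor>"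
definition "T = {a+1..b}"
definition "lo = c1^2"
definition "hi = c2^2"
definition "F2 = f' 2"
definition "X = \<epsilon> * K^2"
definition "\<delta> = hi * X"

lemma eps_pos: "\<epsilon> > 0" unfolding \<epsilon>_def using f''pos A2 by simp
lemma lo_pos: "lo > 0" unfolding lo_def using c1 by simp
lemma hi_ge1: "hi \<ge> 1" unfolding hi_def using c2_ge1 by (simp add: one_le_power)
lemma F2_pos: "F2 > 0" unfolding F2_def using f'pos by simp
lemma X_nonneg: "X \<ge> 0" unfolding X_def using eps_pos by simp
lemma X_le1: "X \<le> 1" unfolding X_def \<epsilon>_def using small \<theta>_def by simp
lemma X_le_m0: "X \<le> m0" unfolding X_def \<epsilon>_def using small \<theta>_def by simp
lemma delta_nonneg: "\<delta> \<ge> 0" unfolding \<delta>_def using X_nonneg hi_ge1 by simp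
lemma delta_le: "\<delta> \<le> hi" unfolding \<delta>_def using X_le1 hi_ge1 by (simp add: mult_left_le)
lemma m0_le: "m0 \<le> A * \<epsilon>" unfolding \<epsilon>_def using f''_lower A2 by simp
lemma Apos: "A > 0" using A2 by simp
lemma K_pos: "K > 0" using K1 by simp

lemma eps_le_X: "\<epsilon> \<le> X"
  unfolding X_def using eps_pos K1 by (simp add: mult_le_cancel_left1 one_le_power)

lemma epsK_le_X: "\<epsilon> * K \<le> X"
  unfolding X_def using eps_pos K1 by (simp add: power2_eq_square mult_left_mono)

lemma K2_le_A: "K^2 \<le> A"
proof -
  have "\<epsilon> * K^2 \<le> \<epsilon> * A" using X_le_m0 m0_le unfolding X_def by (simp add: mult.commute)
  then show ?thesis using eps_pos by simp
qed

lemma K_le_A: "K \<le> A"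
proof -
  have "K \<le> K^2" using K1 by (simp add: power2_eq_square)
  then show ?thesis using K2_le_A by simp
qed

lemma inv_A: "1 \<le> A * X / m0"
proof -
  have "m0 \<le> A * \<epsilon>" by (rule m0_le)
  also have "\<dots> \<le> A * X" using eps_le_X Apos by simp
  finally show ?thesis using m0_pos by simp
qed

lemma K2_A: "K^2 \<le> A * X / m0"
proof -
  have "m0 * K^2 \<le> A * \<epsilon> * K^2" using m0_le by (simp add: mult_right_mono)
  then show ?thesis unfolding X_def using m0_pos by (simp add: field_simps)
qed

lemma K_A: "K \<le> A * X / m0"
proof -
  have "K \<le> K^2" using K1 by (simp add: power2_eq_square)
  then show ?thesis using K2_A by simp
qed

lemma a_facts: "real_of_int a \<le> A" "A < real_of_int a + 1" "2 \<le> a"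
  unfolding a_def using A2 by (auto simp: le_floor_iff)

lemma b_facts: "real_of_int b \<le> 2*A" "2*A < real_of_int b + 1" "a + 1 \<le> b"
proof -
  show "real_of_int b \<le> 2*A" "2*A < real_of_int b + 1" unfolding b_def by auto
  have "real_of_int \<lfloor>A\<rfloor> + 1 \<le> 2*A" using of_int_floor_le[of A] A2 by linarith
  then show "a + 1 \<le> b" unfolding a_def b_def by (simp add: le_floor_iff)
qed

lemma k_facts: "real_of_int k \<le> K" "K < real_of_int k + 1" "1 \<le> k" "K \<le> 2 * real_of_int k"
proof -
  show k1: "real_of_int k \<le> K" "K < real_of_int k + 1" "1 \<le> k" unfolding k_def using K1 by (auto simp: le_floor_iff)
  then show "K \<le> 2 * real_of_int k" by linarith
qed

lemma T_range: "t \<in> T \<Longrightarrow> A < real_of_int t \<and> real_of_int t \<le> 2*A"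
  unfolding T_def using a_facts b_facts by auto

lemma card_T: "real (card T) \<le> 2*A"
proof -
  have "card T = nat (b - a)" unfolding T_def by simp
  then have "real (card T) = real_of_int b - real_of_int a" using b_facts by simp
  then show ?thesis using a_facts b_facts A2 by linarith
qed

lemma T_eq: "T = {n::int. A < real_of_int n \<and> real_of_int n \<le> 2*A}"
  unfolding T_def a_def b_def by (rule int_set_interval[symmetric])

lemma window: "A \<le> y \<Longrightarrow> y \<le> 4*A \<Longrightarrow> lo * \<epsilon> \<le> f'' y \<and> f'' y \<le> hi * \<epsilon>"
  unfolding lo_def hi_def \<epsilon>_def using f''_window[OF Apos] by simp

lemma f'_step: assumes "A \<le> x" "x \<le> y" "y \<le> 4*A"
  shows "lo * \<epsilon> * (y - x) \<le> f' y - f' x \<and> f' y - f' x \<le> hi * \<epsilon> * (y - x)"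
  using f'_diff[of x y "lo*\<epsilon>" "hi*\<epsilon>"] assms window Apos by simp

lemma f'_ge_F2: "2 \<le> x \<Longrightarrow> F2 \<le> f' x"
  unfolding F2_def using f'_mono by simp

end

context mainset begin

definition "Fn n = \<phi> \<lfloor>f (real_of_int n)\<rfloor>"
definition "P t = (\<Sum>h\<in>{1..k}. Fn (t+h))"
definition "Bt t = (\<Sum>n\<in>{n::int. 0 < n \<and> real_of_int n \<le> K}. \<phi> \<lfloor>real_of_int n * f' (real_of_int t) + f (real_of_int t)\<rfloor>)"
definition "Mt t = complex_of_real (1 / f' (real_of_int t)) *
   (\<Sum>m\<in>{m::int. f (real_of_int t) < real_of_int m \<and> real_of_int m \<le> f (real_of_int t) + K * f' (real_of_int t)}. \<phi> m)"
definition "G m = \<phi> m * complex_of_real (deriv (inv_into {0<..} f) (real_of_int m))"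
definition "W t = (\<Sum>m\<in>{m::int. f (real_of_int t) < real_of_int m \<and> real_of_int m \<le> f (real_of_int t + K)}. G m)"
definition "Nt t = card {d\<in>{1..k}. nearZ (real_of_int d * f' (real_of_int t)) \<delta>}"
definition "S1 = (\<Sum>n\<in>T. Fn n)"
definition "Dt t = Dfun \<phi> K (f A) (f (2*A)) (f' (real_of_int t))"

lemma Fn_bound: "norm (Fn n) \<le> 1" unfolding Fn_def using phi by simp

lemma step1: "norm (of_int k * S1 - (\<Sum>t\<in>T. P t)) \<le> 2 * (real_of_int k)^2"
proof -
  have k0: "0 \<le> k" using k_facts by simp
  have e1: "(\<Sum>t\<in>T. P t) = (\<Sum>h\<in>{1..k}. \<Sum>t\<in>T. Fn (t+h))" unfolding P_def by (rule sum.swap)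
  have e2: "of_int k * S1 = (\<Sum>h\<in>{1..k}. S1)" using k0 by simp
  have "of_int k * S1 - (\<Sum>t\<in>T. P t) = (\<Sum>h\<in>{1..k}. S1 - (\<Sum>t\<in>T. Fn (t+h)))"
    unfolding e1 e2 by (simp add: sum_subtractf)
  also have "norm \<dots> \<le> (\<Sum>h\<in>{1..k}. norm (S1 - (\<Sum>t\<in>T. Fn (t+h))))" by (rule norm_sum)
  also have "\<dots> \<le> (\<Sum>h\<in>{1..k}. 2 * real_of_int k)"
  proof (rule sum_mono)
    fix h assume h: "h \<in> {1..k}"
    have "norm ((\<Sum>t\<in>{a+1..b}. Fn (t + h)) - (\<Sum>t\<in>{a+1..b}. Fn t)) \<le> 2*1*real_of_int h"
      by (rule shift_int) (use h Fn_bound in auto)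
    then have "norm (S1 - (\<Sum>t\<in>T. Fn (t+h))) \<le> 2 * real_of_int h"
      unfolding S1_def T_def by (simp add: norm_minus_commute)
    also have "\<dots> \<le> 2 * real_of_int k" using h by simp
    finally show "norm (S1 - (\<Sum>t\<in>T. Fn (t+h))) \<le> 2 * real_of_int k" .
  qed
  also have "\<dots> = 2 * (real_of_int k)^2" using k0 by (simp add: power2_eq_square)
  finally show ?thesis .
qed

lemma taylor_T:
  assumes t: "t \<in> T" and h: "0 \<le> h" "h \<le> K"
  shows "0 \<le> f (real_of_int t + h) - f (real_of_int t) - h * f' (real_of_int t) \<and>
         f (real_of_int t + h) - f (real_of_int t) - h * f' (real_of_int t) \<le> \<delta>"
proof -
  have tr: "A < real_of_int t" "real_of_int t \<le> 2*A" using T_range[OF t] by auto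
  have tay: "0 \<le> f (real_of_int t + h) - f (real_of_int t) - (real_of_int t + h - real_of_int t) * f' (real_of_int t) \<and>
         f (real_of_int t + h) - f (real_of_int t) - (real_of_int t + h - real_of_int t) * f' (real_of_int t)
           \<le> (real_of_int t + h - real_of_int t)^2 * (hi*\<epsilon>)"
  proof (rule taylor)
    show "0 < real_of_int t" using tr Apos by linarith
    show "real_of_int t \<le> real_of_int t + h" using h by simp
    fix z assume "real_of_int t \<le> z" "z \<le> real_of_int t + h"
    then show "f'' z \<le> hi * \<epsilon>" using window[of z] tr h K_le_A by auto
  qed
  have "h^2 * (hi*\<epsilon>) \<le> K^2 * (hi*\<epsilon>)" using h eps_pos hi_ge1
    by (intro mult_right_mono power_mono) auto
  also have "\<dots> = \<delta>" unfolding \<delta>_def X_def by simp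
  finally show ?thesis using tay by simp
qed

lemma step2: assumes t: "t \<in> T" shows "norm (P t - Bt t) \<le> 2 * (1 + real (Nt t))"
proof -
  have Bt_eq: "Bt t = (\<Sum>h\<in>{1..k}. \<phi> \<lfloor>real_of_int h * f' (real_of_int t) + f (real_of_int t)\<rfloor>)"
    unfolding Bt_def nK_set k_def ..
  have "norm (P t - Bt t) \<le> 2 * real (card {h\<in>{1..k}. \<lfloor>f (real_of_int (t+h))\<rfloor> \<noteq> \<lfloor>real_of_int h * f' (real_of_int t) + f (real_of_int t)\<rfloor>})"
    unfolding P_def Fn_def Bt_eq by (rule sum_phi_diff) (use phi in auto)
  also have "card {h\<in>{1..k}. \<lfloor>f (real_of_int (t+h))\<rfloor> \<noteq> \<lfloor>real_of_int h * f' (real_of_int t) + f (real_of_int t)\<rfloor>} \<le> 1 + Nt t"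
    unfolding Nt_def
  proof (rule mismatch_card)
    show "{h\<in>{1..k}. \<lfloor>f (real_of_int (t+h))\<rfloor> \<noteq> \<lfloor>real_of_int h * f' (real_of_int t) + f (real_of_int t)\<rfloor>} \<subseteq> {1..k}" by auto
    fix h assume h: "h \<in> {h\<in>{1..k}. \<lfloor>f (real_of_int (t+h))\<rfloor> \<noteq> \<lfloor>real_of_int h * f' (real_of_int t) + f (real_of_int t)\<rfloor>}"
    have hK: "0 \<le> real_of_int h" "real_of_int h \<le> K" using h k_facts by auto
    note tay = taylor_T[OF t hK]
    show "\<exists>m::int. 0 < real_of_int m - (real_of_int h * f' (real_of_int t) + f (real_of_int t)) \<and>
        real_of_int m - (real_of_int h * f' (real_of_int t) + f (real_of_int t)) \<le> \<delta>"
    proof (rule floor_mismatch)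
      show "real_of_int h * f' (real_of_int t) + f (real_of_int t) \<le> f (real_of_int (t+h))" using tay by simp
      show "f (real_of_int (t+h)) \<le> real_of_int h * f' (real_of_int t) + f (real_of_int t) + \<delta>" using tay by simp
      show "\<lfloor>real_of_int h * f' (real_of_int t) + f (real_of_int t)\<rfloor> \<noteq> \<lfloor>f (real_of_int (t+h))\<rfloor>" using h by auto
    qed
  qed
  then have "real (card {h\<in>{1..k}. \<lfloor>f (real_of_int (t+h))\<rfloor> \<noteq> \<lfloor>real_of_int h * f' (real_of_int t) + f (real_of_int t)\<rfloor>}) \<le> real (1 + Nt t)"
    by (simp only: of_nat_le_iff)
  then have "2 * real (card {h\<in>{1..k}. \<lfloor>f (real_of_int (t+h))\<rfloor> \<noteq> \<lfloor>real_of_int h * f' (real_of_int t) + f (real_of_int t)\<rfloor>}) \<le> 2 * (1 + real (Nt t))"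
    by simp
  finally show ?thesis .
qed

lemma fA_lt: assumes t: "t \<in> T" shows "f A < f (real_of_int t)" "f (real_of_int t) \<le> f (2*A)"
  using f_strict[of A "real_of_int t"] f_mono[of "real_of_int t" "2*A"] T_range[OF t] Apos by auto

lemma step3: assumes t: "t \<in> T" shows "norm (Bt t - Mt t) \<le> K * Dt t"
proof -
  have tr: "A < real_of_int t" "real_of_int t \<le> 2*A" using T_range[OF t] by auto
  have ap: "f' (real_of_int t) > 0" using f'pos tr Apos by simp
  have "gg \<phi> K (f' (real_of_int t)) (f (real_of_int t)) = (1/K) * norm (Bt t - Mt t)"
    unfolding gg_def Bt_def Mt_def ..
  moreover have "gg \<phi> K (f' (real_of_int t)) (f (real_of_int t)) \<le> Dt t"
    unfolding Dt_def by (rule Dfun_ge[OF K_pos ap phi fA_lt[OF t]])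
  ultimately show ?thesis using K_pos mult_left_mono[of "gg \<phi> K (f' (real_of_int t)) (f (real_of_int t))" "Dt t" K]
    by (simp add: field_simps)
qed

end

context mainset begin

lemma G_inv:
  assumes "0 < u" "u \<le> v" "f u < real_of_int m" "real_of_int m \<le> f v"
  shows "\<exists>x. u < x \<and> x \<le> v \<and> G m = \<phi> m * complex_of_real (1 / f' x)"
  using inv_deriv[OF assms] unfolding G_def by auto

lemma G_norm:
  assumes u: "0 < u" "u \<le> v" and m: "f u < real_of_int m" "real_of_int m \<le> f v"
  shows "norm (G m) \<le> 1 / f' u"
proof -
  obtain x where x: "u < x" "x \<le> v" "G m = \<phi> m * complex_of_real (1 / f' x)" using G_inv[OF u m] by blast
  have fx: "f' u \<le> f' x" "0 < f' u" using f'_mono[of u x] f'pos[of u] x u by auto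
  have e: "norm (G m) = norm (\<phi> m) * \<bar>1 / f' x\<bar>" unfolding x(3) by (simp only: norm_mult norm_of_real)
  have e2: "\<bar>1 / f' x\<bar> = 1 / f' x" using fx by simp
  have "norm (\<phi> m) * (1 / f' x) \<le> 1 * (1 / f' u)" using phi fx by (intro mult_mono frac_le) auto
  then show ?thesis using e e2 by simp
qed

lemma norm_sum_bound:
  fixes g :: "int \<Rightarrow> complex"
  assumes "finite S" "\<And>m. m \<in> S \<Longrightarrow> norm (g m) \<le> c"
  shows "norm (\<Sum>m\<in>S. g m) \<le> real (card S) * c"
proof -
  have "norm (\<Sum>m\<in>S. g m) \<le> (\<Sum>m\<in>S. norm (g m))" by (rule norm_sum)
  also have "\<dots> \<le> real (card S) * c" by (rule sum_bounded_above) (use assms in auto)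
  finally show ?thesis .
qed

lemma step4: assumes t: "t \<in> T"
  shows "norm (Mt t - W t) \<le> hi*X/F2 + hi*X/F2^2 + (hi*X+1)/F2"
proof -
  define \<tau> where "\<tau> = real_of_int t"
  define \<alpha> where "\<alpha> = f' \<tau>"
  have tr: "A < \<tau>" "\<tau> \<le> 2*A" using T_range[OF t] unfolding \<tau>_def by auto
  have tpos: "0 < \<tau>" using tr Apos by linarith
  have aF: "F2 \<le> \<alpha>" unfolding \<alpha>_def using f'_ge_F2 tr A2 by simp
  have apos: "0 < \<alpha>" using aF F2_pos by simp
  have tay: "0 \<le> f (\<tau> + K) - f \<tau> - K * \<alpha> \<and> f (\<tau> + K) - f \<tau> - K * \<alpha> \<le> \<delta>"
    using taylor_T[OF t, of K] K_pos unfolding \<tau>_def \<alpha>_def by simp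
  define I0 where "I0 = {m::int. f \<tau> < real_of_int m \<and> real_of_int m \<le> f \<tau> + K * \<alpha>}"
  define J where "J = {m::int. f \<tau> + K * \<alpha> < real_of_int m \<and> real_of_int m \<le> f (\<tau> + K)}"
  have Wsplit: "W t = (\<Sum>m\<in>I0. G m) + (\<Sum>m\<in>J. G m)"
    unfolding W_def I0_def J_def \<tau>_def[symmetric]
    by (rule split_int_interval_sum) (use tay K_pos apos in auto)
  have Mt_eq: "Mt t = (\<Sum>m\<in>I0. \<phi> m * complex_of_real (1/\<alpha>))"
    unfolding Mt_def I0_def \<alpha>_def \<tau>_def by (simp add: sum_distrib_left mult.commute)
  have "Mt t - W t = (\<Sum>m\<in>I0. \<phi> m * complex_of_real (1/\<alpha>) - G m) - (\<Sum>m\<in>J. G m)"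
    unfolding Mt_eq Wsplit by (simp add: sum_subtractf)
  then have "norm (Mt t - W t) \<le> norm (\<Sum>m\<in>I0. \<phi> m * complex_of_real (1/\<alpha>) - G m) + norm (\<Sum>m\<in>J. G m)"
    by (simp add: norm_triangle_ineq4)
  also have "norm (\<Sum>m\<in>I0. \<phi> m * complex_of_real (1/\<alpha>) - G m) \<le> real (card I0) * (hi*\<epsilon>*K/\<alpha>^2)"
  proof (rule norm_sum_bound)
    show "finite I0" unfolding I0_def by (rule finite_int_set_interval)
    fix m assume m: "m \<in> I0"
    have m2: "f \<tau> < real_of_int m" "real_of_int m \<le> f (\<tau> + K)" using m tay unfolding I0_def by auto
    obtain x where x: "\<tau> < x" "x \<le> \<tau> + K" "G m = \<phi> m * complex_of_real (1 / f' x)"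
      using G_inv[OF tpos _ m2] K_pos by auto
    have st: "lo * \<epsilon> * (x - \<tau>) \<le> f' x - f' \<tau> \<and> f' x - f' \<tau> \<le> hi * \<epsilon> * (x - \<tau>)"
      using f'_step[of \<tau> x] tr x K_le_A by auto
    have fx: "\<alpha> \<le> f' x" using st lo_pos eps_pos x unfolding \<alpha>_def by (smt (verit) mult_nonneg_nonneg)
    have d: "f' x - \<alpha> \<le> hi*\<epsilon>*K"
    proof -
      have "hi * \<epsilon> * (x - \<tau>) \<le> hi * \<epsilon> * K" using x hi_ge1 eps_pos by (intro mult_left_mono) auto
      then show ?thesis using st unfolding \<alpha>_def by linarith
    qed
    have "\<phi> m * complex_of_real (1/\<alpha>) - G m = \<phi> m * complex_of_real (1/\<alpha> - 1/f' x)"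
      unfolding x(3) by (simp only: of_real_diff right_diff_distrib)
    then have "norm (\<phi> m * complex_of_real (1/\<alpha>) - G m) = norm (\<phi> m) * \<bar>1/\<alpha> - 1/f' x\<bar>"
      by (simp only: norm_mult norm_of_real)
    also have "\<dots> \<le> 1 * ((f' x - \<alpha>)/(\<alpha> * \<alpha>))"
    proof (rule mult_mono)
      show "norm (\<phi> m) \<le> 1" using phi by simp
      have "\<bar>1/\<alpha> - 1/f' x\<bar> = (f' x - \<alpha>)/(\<alpha> * f' x)" using fx apos by (simp add: field_simps)
      also have "\<dots> \<le> (f' x - \<alpha>)/(\<alpha> * \<alpha>)" using fx apos by (intro divide_left_mono mult_left_mono) auto
      finally show "\<bar>1/\<alpha> - 1/f' x\<bar> \<le> (f' x - \<alpha>)/(\<alpha> * \<alpha>)" .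
    qed auto
    also have "\<dots> \<le> hi*\<epsilon>*K/\<alpha>^2" using d apos by (simp add: power2_eq_square divide_right_mono)
    finally show "norm (\<phi> m * complex_of_real (1/\<alpha>) - G m) \<le> hi*\<epsilon>*K/\<alpha>^2" .
  qed
  also have "real (card I0) * (hi*\<epsilon>*K/\<alpha>^2) \<le> (K*\<alpha> + 1) * (hi*\<epsilon>*K/\<alpha>^2)"
  proof (rule mult_right_mono)
    show "real (card I0) \<le> K*\<alpha> + 1" unfolding I0_def using card_int_set_interval[of "f \<tau>" "f \<tau> + K*\<alpha>"] K_pos apos by simp
    show "0 \<le> hi*\<epsilon>*K/\<alpha>^2" using hi_ge1 eps_pos K_pos by simp
  qed
  also have "(K*\<alpha> + 1) * (hi*\<epsilon>*K/\<alpha>^2) = hi*(\<epsilon>*K^2)/\<alpha> + hi*(\<epsilon>*K)/\<alpha>^2"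
    using apos by (simp add: field_simps power2_eq_square)
  also have "\<dots> \<le> hi*X/F2 + hi*X/F2^2"
  proof (rule add_mono)
    show "hi*(\<epsilon>*K^2)/\<alpha> \<le> hi*X/F2" unfolding X_def using aF F2_pos hi_ge1 eps_pos
      by (intro frac_le mult_left_mono) auto
    have "hi*(\<epsilon>*K) \<le> hi*X" using epsK_le_X hi_ge1 by simp
    moreover have "F2^2 \<le> \<alpha>^2" using aF F2_pos by (intro power_mono) auto
    ultimately show "hi*(\<epsilon>*K)/\<alpha>^2 \<le> hi*X/F2^2" using F2_pos hi_ge1 X_nonneg eps_pos K_pos
      by (intro frac_le) auto
  qed
  also have "norm (\<Sum>m\<in>J. G m) \<le> real (card J) * (1/\<alpha>)"
  proof (rule norm_sum_bound)
    show "finite J" unfolding J_def by (rule finite_int_set_interval)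
    fix m assume m: "m \<in> J"
    have m2: "f \<tau> < real_of_int m" "real_of_int m \<le> f (\<tau> + K)" using m tay K_pos apos unfolding J_def
      by (auto intro: order.strict_trans1[rotated] simp: mult_nonneg_nonneg)
    show "norm (G m) \<le> 1/\<alpha>" unfolding \<alpha>_def using G_norm[OF tpos _ m2] K_pos by simp
  qed
  also have "real (card J) * (1/\<alpha>) \<le> (\<delta> + 1) * (1/F2)"
  proof (rule mult_mono)
    show "real (card J) \<le> \<delta> + 1" unfolding J_def
      using card_int_set_interval[of "f \<tau> + K*\<alpha>" "f (\<tau> + K)"] tay by simp
    show "1/\<alpha> \<le> 1/F2" using aF F2_pos by (intro frac_le) auto
  qed (use delta_nonneg apos in auto)
  also have "(\<delta> + 1) * (1/F2) = (hi*X+1)/F2" unfolding \<delta>_def by simp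
  finally show ?thesis by simp
qed

end

context mainset begin

definition "BV = 1 + (hi + 1) / F2"
definition "S2 = (\<Sum>m\<in>{m::int. f A < real_of_int m \<and> real_of_int m \<le> f (2*A)}. G m)"
definition "V s = (\<Sum>m\<in>{m::int. f (real_of_int s) < real_of_int m \<and> real_of_int m \<le> f (real_of_int (s+1))}. G m)"
definition "R t = (\<Sum>m\<in>{m::int. f (real_of_int (t+k)) < real_of_int m \<and> real_of_int m \<le> f (real_of_int t + K)}. G m)"

lemma BV_nonneg: "0 \<le> BV" unfolding BV_def using hi_ge1 F2_pos by simp

lemma seg_bound:
  assumes uv: "A \<le> u" "u \<le> v" "v \<le> u + 1" "v \<le> 4*A"
  shows "norm (\<Sum>m\<in>{m::int. f u < real_of_int m \<and> real_of_int m \<le> f v}. G m) \<le> BV"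
proof -
  have upos: "0 < u" using uv Apos by simp
  have fu: "F2 \<le> f' u" using f'_ge_F2 uv A2 by simp
  have fupos: "0 < f' u" using fu F2_pos by simp
  have "norm (\<Sum>m\<in>{m::int. f u < real_of_int m \<and> real_of_int m \<le> f v}. G m) \<le>
        real (card {m::int. f u < real_of_int m \<and> real_of_int m \<le> f v}) * (1 / f' u)"
  proof (rule norm_sum_bound)
    show "finite {m::int. f u < real_of_int m \<and> real_of_int m \<le> f v}" by (rule finite_int_set_interval)
    fix m assume "m \<in> {m::int. f u < real_of_int m \<and> real_of_int m \<le> f v}"
    then show "norm (G m) \<le> 1 / f' u" using G_norm[OF upos uv(2)] by auto
  qed
  also have "\<dots> \<le> (f' u + hi + 1) * (1 / f' u)"
  proof (rule mult_right_mono)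
    have "0*(v-u) \<le> f v - f u \<and> f v - f u \<le> f' v * (v-u)"
    proof (rule f_diff[OF upos uv(2)])
      fix z assume z: "u \<le> z" "z \<le> v"
      then have "0 < z" using upos by simp
      then show "0 \<le> f' z \<and> f' z \<le> f' v" using f'pos[of z] f'_mono[of z v] z by simp
    qed
    then have fv: "f v - f u \<le> f' v * (v - u)" by simp
    have fv2: "f' v - f' u \<le> hi * \<epsilon> * (v - u)" using f'_step[of u v] uv by simp
    have "hi * \<epsilon> * (v - u) \<le> hi * 1 * 1"
      using eps_le_X X_le1 hi_ge1 eps_pos uv by (intro mult_mono) auto
    then have fv3: "f' v \<le> f' u + hi" using fv2 by simp
    have "f' v * (v - u) \<le> f' v * 1" using uv f'pos[of v] upos by (intro mult_left_mono) auto
    then have "f v - f u \<le> f' u + hi" using fv fv3 by linarith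
    moreover have "f u \<le> f v" using f_mono[OF upos uv(2)] .
    ultimately show "real (card {m::int. f u < real_of_int m \<and> real_of_int m \<le> f v}) \<le> f' u + hi + 1"
      using card_int_set_interval[of "f u" "f v"] by linarith
  qed (use fupos in simp)
  also have "(f' u + hi + 1) * (1 / f' u) = 1 + (hi + 1) / f' u" using fupos by (simp add: field_simps)
  also have "\<dots> \<le> BV" unfolding BV_def using fu F2_pos hi_ge1 by (simp add: frac_le)
  finally show ?thesis .
qed

lemma W_decomp: assumes t: "t \<in> T"
  shows "W t = (\<Sum>j\<in>{0..<k}. V (t+j)) + R t"
proof -
  define \<tau> where "\<tau> = real_of_int t"
  have tr: "A < \<tau>" "\<tau> \<le> 2*A" using T_range[OF t] unfolding \<tau>_def by auto
  have tpos: "0 < \<tau>" using tr Apos by linarith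
  have k0: "0 \<le> k" using k_facts by simp
  have fm1: "f \<tau> \<le> f (real_of_int (t+k))" using f_mono[of \<tau> "real_of_int (t+k)"] tpos k0 unfolding \<tau>_def by simp
  have fm2: "f (real_of_int (t+k)) \<le> f (\<tau> + K)" using f_mono[of "real_of_int (t+k)" "\<tau> + K"] tpos k0 k_facts unfolding \<tau>_def by simp
  have "W t = (\<Sum>m\<in>{m::int. f \<tau> < real_of_int m \<and> real_of_int m \<le> f (real_of_int (t+k))}. G m) + R t"
    unfolding W_def R_def \<tau>_def[symmetric] by (rule split_int_interval_sum[OF fm1 fm2])
  also have "(\<Sum>m\<in>{m::int. f \<tau> < real_of_int m \<and> real_of_int m \<le> f (real_of_int (t+k))}. G m) = (\<Sum>s\<in>{t..<t+k}. V s)"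
    unfolding V_def \<tau>_def
    by (rule sum_blocks[symmetric, where v="\<lambda>s. f (real_of_int s)"]) (use tpos k0 f_mono in \<open>auto simp: \<tau>_def\<close>)
  also have "(\<Sum>s\<in>{t..<t+k}. V s) = (\<Sum>j\<in>{0..<k}. V (t+j))"
    by (rule sum.reindex_bij_witness[of _ "\<lambda>j. t + j" "\<lambda>s. s - t"]) auto
  finally show ?thesis .
qed

lemma step5: "norm ((\<Sum>t\<in>T. W t) - of_int k * S2) \<le> real (card T) * BV + 2*BV*(real_of_int k)^2 + 2*BV*real_of_int k"
proof -
  have k0: "0 \<le> k" using k_facts by simp
  have Wsum: "(\<Sum>t\<in>T. W t) = (\<Sum>j\<in>{0..<k}. \<Sum>t\<in>T. V (t+j)) + (\<Sum>t\<in>T. R t)"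
  proof -
    have "(\<Sum>t\<in>T. W t) = (\<Sum>t\<in>T. (\<Sum>j\<in>{0..<k}. V (t+j)) + R t)"
      by (rule sum.cong[OF refl]) (rule W_decomp)
    also have "\<dots> = (\<Sum>t\<in>T. \<Sum>j\<in>{0..<k}. V (t+j)) + (\<Sum>t\<in>T. R t)" by (rule sum.distrib)
    also have "(\<Sum>t\<in>T. \<Sum>j\<in>{0..<k}. V (t+j)) = (\<Sum>j\<in>{0..<k}. \<Sum>t\<in>T. V (t+j))" by (rule sum.swap)
    finally show ?thesis .
  qed
  have Tlt: "T = {a+1..<b+1}" unfolding T_def by auto
  have apos: "0 < real_of_int (a+1)" using a_facts by simp
  have Vsum: "(\<Sum>t\<in>T. V t) = (\<Sum>m\<in>{m::int. f (real_of_int (a+1)) < real_of_int m \<and> real_of_int m \<le> f (real_of_int (b+1))}. G m)"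
    unfolding Tlt V_def
    by (rule sum_blocks[where v="\<lambda>s. f (real_of_int s)"]) (use apos b_facts f_mono in auto)
  have y12: "f A \<le> f (real_of_int (a+1))" using f_mono[of A "real_of_int (a+1)"] a_facts Apos by simp
  have y23: "f (real_of_int (a+1)) \<le> f (2*A)" using f_mono[of "real_of_int (a+1)" "2*A"] b_facts apos by simp
  have y34: "f (2*A) \<le> f (real_of_int (b+1))" using f_mono[of "2*A" "real_of_int (b+1)"] b_facts Apos by simp
  define s12 where "s12 = (\<Sum>m\<in>{m::int. f A < real_of_int m \<and> real_of_int m \<le> f (real_of_int (a+1))}. G m)"
  define s34 where "s34 = (\<Sum>m\<in>{m::int. f (2*A) < real_of_int m \<and> real_of_int m \<le> f (real_of_int (b+1))}. G m)"
  define s14 where "s14 = (\<Sum>m\<in>{m::int. f A < real_of_int m \<and> real_of_int m \<le> f (real_of_int (b+1))}. G m)"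
  have e1: "s14 = s12 + (\<Sum>t\<in>T. V t)" unfolding s14_def s12_def Vsum
    by (rule split_int_interval_sum) (use y12 y23 y34 in auto)
  have e2: "s14 = S2 + s34" unfolding s14_def S2_def s34_def
    by (rule split_int_interval_sum) (use y12 y23 y34 in auto)
  have n12: "norm s12 \<le> BV" unfolding s12_def by (rule seg_bound) (use a_facts in auto)
  have n34: "norm s34 \<le> BV" unfolding s34_def by (rule seg_bound) (use b_facts A2 in auto)
  have dVS: "norm ((\<Sum>t\<in>T. V t) - S2) \<le> 2*BV"
  proof -
    have "(\<Sum>t\<in>T. V t) - S2 = s34 - s12" using e1 e2 by (simp add: algebra_simps)
    then show ?thesis using norm_triangle_ineq4[of s34 s12] n12 n34 by simp
  qed
  have sh: "norm ((\<Sum>j\<in>{0..<k}. \<Sum>t\<in>T. V (t+j)) - of_int k * (\<Sum>t\<in>T. V t)) \<le> 2*BV*(real_of_int k)^2"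
  proof -
    have "of_int k * (\<Sum>t\<in>T. V t) = (\<Sum>j\<in>{0..<k}. (\<Sum>t\<in>T. V t))" using k0 by simp
    then have "(\<Sum>j\<in>{0..<k}. \<Sum>t\<in>T. V (t+j)) - of_int k * (\<Sum>t\<in>T. V t) =
               (\<Sum>j\<in>{0..<k}. (\<Sum>t\<in>T. V (t+j)) - (\<Sum>t\<in>T. V t))" by (simp add: sum_subtractf)
    also have "norm \<dots> \<le> (\<Sum>j\<in>{0..<k}. norm ((\<Sum>t\<in>T. V (t+j)) - (\<Sum>t\<in>T. V t)))" by (rule norm_sum)
    also have "\<dots> \<le> (\<Sum>j\<in>{0..<k}. 2*BV*real_of_int k)"
    proof (rule sum_mono)
      fix j assume j: "j \<in> {0..<k}"
      have "norm ((\<Sum>t\<in>{a+1..b}. V (t+j)) - (\<Sum>t\<in>{a+1..b}. V t)) \<le> 2*BV*real_of_int j"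
      proof (rule shift_int[OF _ BV_nonneg])
        show "0 \<le> j" using j by simp
        fix n assume n: "a+1 \<le> n" "n \<le> b + j"
        have "real_of_int n + 1 \<le> real_of_int b + K + 1" using n j k_facts by simp
        also have "\<dots> \<le> 4*A" using b_facts K_le_A A2 by simp
        finally have nv: "real_of_int n + 1 \<le> 4*A" .
        show "norm (V n) \<le> BV" unfolding V_def by (rule seg_bound) (use n a_facts nv in auto)
      qed
      also have "\<dots> \<le> 2*BV*real_of_int k" using j BV_nonneg by (intro mult_left_mono) auto
      finally show "norm ((\<Sum>t\<in>T. V (t+j)) - (\<Sum>t\<in>T. V t)) \<le> 2*BV*real_of_int k" unfolding T_def .
    qed
    also have "\<dots> = 2*BV*(real_of_int k)^2" using k0 by (simp add: power2_eq_square)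
    finally show ?thesis .
  qed
  have Rb: "norm (\<Sum>t\<in>T. R t) \<le> real (card T) * BV"
  proof (rule norm_sum_bound)
    show "finite T" unfolding T_def by simp
    fix t assume t: "t \<in> T"
    have tr: "A < real_of_int t" "real_of_int t \<le> 2*A" using T_range[OF t] by auto
    show "norm (R t) \<le> BV" unfolding R_def
      by (rule seg_bound) (use tr k_facts K_le_A in auto)
  qed
  have "(\<Sum>t\<in>T. W t) - of_int k * S2 = ((\<Sum>j\<in>{0..<k}. \<Sum>t\<in>T. V (t+j)) - of_int k * (\<Sum>t\<in>T. V t))
        + of_int k * ((\<Sum>t\<in>T. V t) - S2) + (\<Sum>t\<in>T. R t)"
    unfolding Wsum by (simp add: algebra_simps)
  also have "norm \<dots> \<le> norm ((\<Sum>j\<in>{0..<k}. \<Sum>t\<in>T. V (t+j)) - of_int k * (\<Sum>t\<in>T. V t))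
        + norm (of_int k * ((\<Sum>t\<in>T. V t) - S2)) + norm (\<Sum>t\<in>T. R t)"
    by (rule order_trans[OF norm_triangle_ineq add_right_mono[OF norm_triangle_ineq]])
  also have "norm (of_int k * ((\<Sum>t\<in>T. V t) - S2)) \<le> real_of_int k * (2*BV)"
  proof -
    have "norm (of_int k * ((\<Sum>t\<in>T. V t) - S2)) = real_of_int k * norm ((\<Sum>t\<in>T. V t) - S2)"
      using k0 by (simp add: norm_mult)
    then show ?thesis using dVS k0 by (simp add: mult_left_mono)
  qed
  finally show ?thesis using sh Rb by (simp add: algebra_simps)
qed

end

lemma integral_blocks:
  fixes u :: "int \<Rightarrow> real" and D :: "real \<Rightarrow> real"
  assumes mono: "\<And>s t. p \<le> s \<Longrightarrow> s \<le> t \<Longrightarrow> u s \<le> u t"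
    and int: "D integrable_on {u p..u q0}" and pq: "p \<le> q" "q \<le> q0"
  shows "(\<Sum>t\<in>{p..<q}. integral {u t..u (t+1)} D) = integral {u p..u q} D"
  using pq
proof (induction q rule: int_ge_induct)
  case base then show ?case by simp
next
  case (step q)
  have "{p..<q+1} = insert q {p..<q}" using step by auto
  then have "(\<Sum>t\<in>{p..<q+1}. integral {u t..u (t+1)} D) = integral {u q..u (q+1)} D + integral {u p..u q} D"
    using step by simp
  also have "\<dots> = integral {u p..u (q+1)} D"
  proof -
    have i: "D integrable_on {u p..u (q+1)}"
      by (rule integrable_subinterval_real[OF int]) (use mono step in auto)
    show ?thesis using Henstock_Kurzweil_Integration.integral_combine[OF _ _ i, of "u q"] mono[of p q] mono[of q "q+1"] step by simp
  qed
  finally show ?case .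
qed

context mainset begin

definition "Q = 2*\<delta>*hi*A/lo + real_of_int k*hi*\<epsilon>*A + (2*\<delta>+1)*2*\<delta>/(lo*\<epsilon>) + 2*\<delta> + 1"

lemma card_filter_sum: "finite S \<Longrightarrow> card {x\<in>S. Pr x} = (\<Sum>x\<in>S. if Pr x then 1 else 0)"
  using sum.inter_filter[of S "\<lambda>_. 1::nat" Pr] by simp

lemma step7: "real (\<Sum>t\<in>T. Nt t) \<le> real_of_int k * Q"
proof -
  have "(\<Sum>t\<in>T. Nt t) = (\<Sum>t\<in>T. \<Sum>d\<in>{1..k}. if nearZ (real_of_int d * f' (real_of_int t)) \<delta> then 1 else 0)"
    unfolding Nt_def by (rule sum.cong[OF refl]) (rule card_filter_sum, simp)
  also have "\<dots> = (\<Sum>d\<in>{1..k}. \<Sum>t\<in>T. if nearZ (real_of_int d * f' (real_of_int t)) \<delta> then 1 else 0)"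
    by (rule sum.swap)
  also have "\<dots> = (\<Sum>d\<in>{1..k}. card {t\<in>T. nearZ (real_of_int d * f' (real_of_int t)) \<delta>})"
    by (rule sum.cong[OF refl]) (rule card_filter_sum[symmetric], simp add: T_def)
  finally have e: "real (\<Sum>t\<in>T. Nt t) = (\<Sum>d\<in>{1..k}. real (card {t\<in>T. nearZ (real_of_int d * f' (real_of_int t)) \<delta>}))"
    by simp
  have "\<dots> \<le> (\<Sum>d\<in>{1..k}. Q)"
  proof (rule sum_mono)
    fix d assume d: "d \<in> {1..k}"
    define u where "u t = real_of_int d * f' (real_of_int t)" for t
    define \<gamma> where "\<gamma> = real_of_int d * (lo * \<epsilon>)"
    have dpos: "1 \<le> real_of_int d" "real_of_int d \<le> real_of_int k" using d by auto
    have gpos: "\<gamma> > 0" unfolding \<gamma>_def using dpos lo_pos eps_pos by simp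
    have gap: "u t + \<gamma> \<le> u (t+1)" if "a+1 \<le> t" "t < b" for t
    proof -
      have tr: "A \<le> real_of_int t" "real_of_int t + 1 \<le> 4*A" using that a_facts b_facts A2 by linarith+
      have "lo * \<epsilon> * 1 \<le> f' (real_of_int t + 1) - f' (real_of_int t)"
        using f'_step[of "real_of_int t" "real_of_int t + 1"] tr by simp
      then have "real_of_int d * (lo * \<epsilon>) \<le> real_of_int d * (f' (real_of_int t + 1) - f' (real_of_int t))"
        using dpos by (intro mult_left_mono) auto
      then show ?thesis unfolding u_def \<gamma>_def by (simp add: algebra_simps)
    qed
    have "real (card {t\<in>{a+1..b}. nearZ (u t) \<delta>}) \<le> (u b - u (a+1) + 2*\<delta> + 1) * (2*\<delta>/\<gamma> + 1)"
      by (rule near_count[where u=u and a="a+1" and b=b, OF gap gpos delta_nonneg]) (use b_facts in auto)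
    also have "\<dots> \<le> (real_of_int d * (hi*\<epsilon>*A) + 2*\<delta> + 1) * (2*\<delta>/\<gamma> + 1)"
    proof (rule mult_right_mono)
      have "f' (real_of_int b) \<le> f' (2*A)" using f'_mono[of "real_of_int b" "2*A"] b_facts a_facts by simp
      moreover have "f' A \<le> f' (real_of_int (a+1))" using f'_mono[of A "real_of_int (a+1)"] a_facts Apos by simp
      moreover have "f' (2*A) - f' A \<le> hi*\<epsilon>*(2*A - A)" using f'_step[of A "2*A"] Apos by simp
      ultimately have "f' (real_of_int b) - f' (real_of_int (a+1)) \<le> hi*\<epsilon>*A" by simp
      then have "real_of_int d * (f' (real_of_int b) - f' (real_of_int (a+1))) \<le> real_of_int d * (hi*\<epsilon>*A)"
        using dpos by (intro mult_left_mono) auto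
      then show "u b - u (a+1) + 2*\<delta> + 1 \<le> real_of_int d * (hi*\<epsilon>*A) + 2*\<delta> + 1"
        unfolding u_def by (simp add: algebra_simps)
      show "0 \<le> 2*\<delta>/\<gamma> + 1" using delta_nonneg gpos by simp
    qed
    also have "\<dots> = 2*\<delta>*hi*A/lo + real_of_int d*hi*\<epsilon>*A + (2*\<delta>+1)*2*\<delta>/(real_of_int d*(lo*\<epsilon>)) + 2*\<delta> + 1"
      unfolding \<gamma>_def using dpos lo_pos eps_pos by (simp add: field_simps)
    also have "\<dots> \<le> Q" unfolding Q_def
    proof -
      have "real_of_int d*hi*\<epsilon>*A \<le> real_of_int k*hi*\<epsilon>*A"
        using dpos hi_ge1 eps_pos Apos by (intro mult_right_mono) auto
      moreover have "(2*\<delta>+1)*2*\<delta>/(real_of_int d*(lo*\<epsilon>)) \<le> (2*\<delta>+1)*2*\<delta>/(lo*\<epsilon>)"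
      proof (rule divide_left_mono)
        have "0 < lo*\<epsilon>" using lo_pos eps_pos by simp
        then show "lo*\<epsilon> \<le> real_of_int d*(lo*\<epsilon>)" using dpos mult_right_mono[of 1 "real_of_int d" "lo*\<epsilon>"] by simp
        show "0 \<le> (2*\<delta>+1)*2*\<delta>" using delta_nonneg by simp
        show "0 < real_of_int d*(lo*\<epsilon>) * (lo*\<epsilon>)" using dpos lo_pos eps_pos by simp
      qed
      ultimately show "2*\<delta>*hi*A/lo + real_of_int d*hi*\<epsilon>*A + (2*\<delta>+1)*2*\<delta>/(real_of_int d*(lo*\<epsilon>)) + 2*\<delta> + 1
          \<le> 2*\<delta>*hi*A/lo + real_of_int k*hi*\<epsilon>*A + (2*\<delta>+1)*2*\<delta>/(lo*\<epsilon>) + 2*\<delta> + 1" by linarith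
    qed
    finally show "real (card {t\<in>T. nearZ (real_of_int d * f' (real_of_int t)) \<delta>}) \<le> Q"
      unfolding T_def u_def .
  qed
  also have "\<dots> = real_of_int k * Q" using k_facts by simp
  finally show ?thesis using e by simp
qed

end

context mainset begin

definition "Dfn = Dfun \<phi> K (f A) (f (2*A))"
definition "Dint = integral {f' A..f' (2*A)} Dfn"
definition "E6 = 2*hi*\<epsilon>/F2 + hi*\<epsilon>/F2^2 + 1/(K*F2)"
definition "et t = (2/K)*(1 + real (Nt t)) + E6"

lemma pq: "f A < f (2*A)" using f_strict Apos by simp
lemma f'A_pos: "0 < f' A" using f'pos Apos by simp
lemma f'A_le: "f' A \<le> f' (2*A)" using f'_mono Apos by simp
lemma Dfn_int: "Dfn integrable_on {f' A..f' (2*A)}"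
  unfolding Dfn_def by (rule Dfun_integrable[OF K_pos f'A_pos f'A_le phi pq])
lemma Dfn_nonneg: "0 < \<alpha> \<Longrightarrow> 0 \<le> Dfn \<alpha>"
  unfolding Dfn_def by (rule Dfun_nonneg[OF K_pos _ phi pq])
lemma Dint_nonneg: "0 \<le> Dint"
  unfolding Dint_def by (rule integral_nonneg[OF Dfn_int]) (use Dfn_nonneg f'A_pos in auto)
lemma E6_nonneg: "0 \<le> E6" unfolding E6_def using hi_ge1 eps_pos F2_pos K_pos by simp
lemma et_nonneg: "0 \<le> et t" unfolding et_def using E6_nonneg K_pos by simp

lemma cell_bound:
  assumes t: "a+1 \<le> t" "t < b"
  shows "Dt t \<le> et t + integral {f' (real_of_int t)..f' (real_of_int t + 1)} Dfn / (lo*\<epsilon>)"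
proof -
  define \<tau> where "\<tau> = real_of_int t"
  define \<alpha>0 where "\<alpha>0 = f' \<tau>"
  define \<alpha>1 where "\<alpha>1 = f' (\<tau>+1)"
  define \<eta> where "\<eta> = \<alpha>1 - \<alpha>0"
  have tr: "A \<le> \<tau>" "\<tau> + 1 \<le> 2*A" using t a_facts b_facts unfolding \<tau>_def by linarith+
  have st: "lo * \<epsilon> * 1 \<le> \<eta> \<and> \<eta> \<le> hi * \<epsilon> * 1" unfolding \<eta>_def \<alpha>0_def \<alpha>1_def
    using f'_step[of \<tau> "\<tau>+1"] tr Apos by simp
  have aF: "F2 \<le> \<alpha>0" unfolding \<alpha>0_def using f'_ge_F2 tr A2 by simp
  have a0: "0 < \<alpha>0" using aF F2_pos by simp
  have sub: "{\<alpha>0..\<alpha>1} \<subseteq> {f' A..f' (2*A)}" unfolding \<alpha>0_def \<alpha>1_def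
    using f'_mono[of A \<tau>] f'_mono[of "\<tau>+1" "2*A"] tr Apos by auto
  have pw: "Dt t \<le> Dfn \<alpha> + et t" if \<alpha>: "\<alpha>0 \<le> \<alpha>" "\<alpha> \<le> \<alpha>1" for \<alpha>
  proof -
    have c: "Dfun \<phi> K (f A) (f (2*A)) \<alpha>0 \<le> Dfun \<phi> K (f A) (f (2*A)) \<alpha> + (2/K)*(1 + real(card {d\<in>{1..\<lfloor>K\<rfloor>}. nearZ (real_of_int d*\<alpha>0) (K*\<eta>)}))
            + 2*\<eta>/\<alpha>0 + \<eta>/\<alpha>0^2 + 1/(K*\<alpha>0)"
      by (rule Dfun_compare[OF K1 a0 \<alpha>(1) _ phi pq]) (use \<alpha> \<eta>_def in simp)
    have "card {d\<in>{1..\<lfloor>K\<rfloor>}. nearZ (real_of_int d*\<alpha>0) (K*\<eta>)} \<le> Nt t"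
      unfolding Nt_def k_def
    proof (rule card_mono)
      show "finite {d\<in>{1..\<lfloor>K\<rfloor>}. nearZ (real_of_int d * f' (real_of_int t)) \<delta>}"
        by (rule finite_subset[of _ "{1..\<lfloor>K\<rfloor>}"]) auto
      have "K*\<eta> \<le> K*(hi*\<epsilon>)" using st K_pos by (intro mult_left_mono) auto
      also have "\<dots> \<le> K^2*(hi*\<epsilon>)" using K1 hi_ge1 eps_pos by (intro mult_right_mono) (auto simp: power2_eq_square)
      also have "\<dots> = \<delta>" unfolding \<delta>_def X_def by simp
      finally have "K*\<eta> \<le> \<delta>" .
      then show "{d\<in>{1..\<lfloor>K\<rfloor>}. nearZ (real_of_int d*\<alpha>0) (K*\<eta>)} \<subseteq> {d\<in>{1..\<lfloor>K\<rfloor>}. nearZ (real_of_int d * f' (real_of_int t)) \<delta>}"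
        unfolding \<alpha>0_def \<tau>_def using nearZ_mono by blast
    qed
    then have c1: "(2/K)*(1 + real(card {d\<in>{1..\<lfloor>K\<rfloor>}. nearZ (real_of_int d*\<alpha>0) (K*\<eta>)})) \<le> (2/K)*(1 + real (Nt t))"
      using K_pos by (intro mult_left_mono) auto
    have c2: "2*\<eta>/\<alpha>0 \<le> 2*hi*\<epsilon>/F2" using st aF F2_pos hi_ge1 eps_pos by (intro frac_le) auto
    have c3: "\<eta>/\<alpha>0^2 \<le> hi*\<epsilon>/F2^2" using st aF F2_pos hi_ge1 eps_pos by (intro frac_le power_mono) auto
    have c4: "1/(K*\<alpha>0) \<le> 1/(K*F2)" using aF F2_pos K_pos by (intro frac_le mult_left_mono) auto
    show ?thesis using c c1 c2 c3 c4 unfolding Dt_def Dfn_def et_def E6_def \<alpha>0_def \<tau>_def by linarith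
  qed
  have i01: "Dfn integrable_on {\<alpha>0..\<alpha>1}" by (rule integrable_subinterval_real[OF Dfn_int sub])
  have "integral {\<alpha>0..\<alpha>1} (\<lambda>_. Dt t - et t) \<le> integral {\<alpha>0..\<alpha>1} Dfn"
  proof (rule integral_le[OF integrable_const_ivl i01])
    fix x assume "x \<in> {\<alpha>0..\<alpha>1}"
    then have "Dt t \<le> Dfn x + et t" using pw by simp
    then show "Dt t - et t \<le> Dfn x" by simp
  qed
  moreover have "integral {\<alpha>0..\<alpha>1} (\<lambda>_. Dt t - et t) = \<eta> * (Dt t - et t)"
  proof -
    have "\<alpha>0 \<le> \<alpha>1" using st lo_pos eps_pos unfolding \<eta>_def by (smt (verit) mult_pos_pos)
    then show ?thesis unfolding \<eta>_def by simp
  qed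
  ultimately have h: "\<eta> * (Dt t - et t) \<le> integral {\<alpha>0..\<alpha>1} Dfn" by linarith
  have ip: "0 \<le> integral {\<alpha>0..\<alpha>1} Dfn"
    by (rule integral_nonneg[OF i01]) (use Dfn_nonneg a0 in auto)
  have le: "lo*\<epsilon> > 0" using lo_pos eps_pos by simp
  have "Dt t - et t \<le> integral {\<alpha>0..\<alpha>1} Dfn / (lo*\<epsilon>)"
  proof (cases "Dt t - et t \<le> 0")
    case True
    have "0 \<le> integral {\<alpha>0..\<alpha>1} Dfn / (lo*\<epsilon>)" using ip le by simp
    then show ?thesis using True by linarith
  next
    case False
    have "(lo*\<epsilon>) * (Dt t - et t) \<le> \<eta> * (Dt t - et t)" using st False by (intro mult_right_mono) auto
    then have "(lo*\<epsilon>) * (Dt t - et t) \<le> integral {\<alpha>0..\<alpha>1} Dfn" using h by linarith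
    then have "(Dt t - et t) * (lo*\<epsilon>) \<le> integral {\<alpha>0..\<alpha>1} Dfn" by (simp add: mult.commute)
    then show ?thesis using pos_le_divide_eq[OF le] by blast
  qed
  then show ?thesis unfolding \<alpha>0_def \<alpha>1_def \<tau>_def by simp
qed

lemma step6: "(\<Sum>t\<in>T. Dt t) \<le> (2/K)*(\<Sum>t\<in>T. (1 + real (Nt t))) + real (card T) * E6 + Dint/(lo*\<epsilon>) + 2 + 1/F2"
proof -
  have Tins: "T = insert b {a+1..<b}" unfolding T_def using b_facts by auto
  have "(\<Sum>t\<in>{a+1..<b}. Dt t) \<le> (\<Sum>t\<in>{a+1..<b}. et t + integral {f' (real_of_int t)..f' (real_of_int t + 1)} Dfn / (lo*\<epsilon>))"
    by (rule sum_mono) (rule cell_bound, auto)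
  also have "\<dots> = (\<Sum>t\<in>{a+1..<b}. et t) + (\<Sum>t\<in>{a+1..<b}. integral {f' (real_of_int t)..f' (real_of_int (t + 1))} Dfn) / (lo*\<epsilon>)"
    by (simp add: sum.distrib sum_divide_distrib)
  also have "(\<Sum>t\<in>{a+1..<b}. integral {f' (real_of_int t)..f' (real_of_int (t + 1))} Dfn) = integral {f' (real_of_int (a+1))..f' (real_of_int b)} Dfn"
  proof (rule integral_blocks[where u="\<lambda>s. f' (real_of_int s)" and q0=b])
    show "f' (real_of_int s) \<le> f' (real_of_int t)" if "a+1 \<le> s" "s \<le> t" for s t
      using f'_mono that a_facts by simp
    show "Dfn integrable_on {f' (real_of_int (a + 1))..f' (real_of_int b)}"
      by (rule integrable_subinterval_real[OF Dfn_int])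
         (use f'_mono[of A "real_of_int (a+1)"] f'_mono[of "real_of_int b" "2*A"] a_facts b_facts Apos in auto)
  qed (use b_facts in auto)
  also have "integral {f' (real_of_int (a+1))..f' (real_of_int b)} Dfn \<le> Dint"
    unfolding Dint_def
  proof (rule integral_subset_le)
    show "{f' (real_of_int (a+1))..f' (real_of_int b)} \<subseteq> {f' A..f' (2*A)}"
      using f'_mono[of A "real_of_int (a+1)"] f'_mono[of "real_of_int b" "2*A"] a_facts b_facts Apos by auto
    then show "Dfn integrable_on {f' (real_of_int (a+1))..f' (real_of_int b)}"
      by (rule integrable_subinterval_real[OF Dfn_int])
    show "Dfn integrable_on {f' A..f' (2*A)}" by (rule Dfn_int)
    show "\<forall>x\<in>{f' A..f' (2 * A)}. 0 \<le> Dfn x" using Dfn_nonneg f'A_pos by auto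
  qed
  finally have s1: "(\<Sum>t\<in>{a+1..<b}. Dt t) \<le> (\<Sum>t\<in>{a+1..<b}. et t) + Dint / (lo*\<epsilon>)"
    using lo_pos eps_pos by (simp add: divide_right_mono)
  have "(\<Sum>t\<in>{a+1..<b}. et t) \<le> (\<Sum>t\<in>T. et t)"
    by (rule sum_mono2) (use et_nonneg Tins in auto)
  also have "\<dots> = (2/K)*(\<Sum>t\<in>T. (1 + real (Nt t))) + real (card T) * E6"
    unfolding et_def by (simp only: sum.distrib sum_distrib_left[symmetric] sum_constant)
  finally have s2: "(\<Sum>t\<in>{a+1..<b}. et t) \<le> (2/K)*(\<Sum>t\<in>T. (1 + real (Nt t))) + real (card T) * E6" .
  have bpos: "0 < f' (real_of_int b)" and bF: "F2 \<le> f' (real_of_int b)"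
    using f'pos f'_ge_F2 b_facts a_facts by auto
  have "Dt b \<le> 2 + 1/(K * f' (real_of_int b))" unfolding Dt_def by (rule Dfun_le[OF K_pos bpos phi pq])
  also have "1/(K * f' (real_of_int b)) \<le> 1/F2"
  proof -
    have "1 * f' (real_of_int b) \<le> K * f' (real_of_int b)" using K1 bpos by (intro mult_right_mono) auto
    then have "F2 \<le> K * f' (real_of_int b)" using bF by simp
    then show ?thesis using F2_pos by (intro divide_left_mono) auto
  qed
  finally have s3: "Dt b \<le> 2 + 1/F2" by simp
  have "(\<Sum>t\<in>T. Dt t) = Dt b + (\<Sum>t\<in>{a+1..<b}. Dt t)" unfolding Tins by simp
  then show ?thesis using s1 s2 s3 by linarith
qed

end

context fset begin
definition "loF = c1^2"
definition "hiF = c2^2"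
definition "F2F = f' 2"
definition "BVF = 1 + (hiF + 1) / F2F"
definition "QX = 2*hiF^2/loF + hiF + (2*hiF+1)*2*hiF/(loF*m0) + (2*hiF+1)/m0"
definition "E4X = 2*hiF/F2F + hiF/F2F^2"
definition "Cx = 2/m0 + 4*QX + 4*E4X + (2+1/F2F)/m0 + 2*E4X + 2*BVF/m0 + 2*BVF/m0"
definition "Ck = 16 + 4/F2F + 4/F2F + 4*BVF"
definition "CI = 2*hiF/loF"
end

context mainset begin

lemma consts_eq: "lo = loF" "hi = hiF" "F2 = F2F" "BV = BVF"
  unfolding lo_def loF_def hi_def hiF_def F2_def F2F_def BV_def BVF_def by simp_all

definition "Iv = I_avg f f' \<phi> A K"

lemma Iv_eq: "Iv = (1 / (f' (2*A) - f' A)) * Dint"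
  unfolding Iv_def Dint_def Dfn_def by (rule I_avg_eq)

lemma Lam: "0 < f' (2*A) - f' A" "f' (2*A) - f' A \<le> hi*\<epsilon>*A"
proof -
  have "lo * \<epsilon> * (2*A - A) \<le> f' (2*A) - f' A \<and> f' (2*A) - f' A \<le> hi * \<epsilon> * (2*A - A)"
    using f'_step[of A "2*A"] Apos by simp
  then show "0 < f' (2*A) - f' A" "f' (2*A) - f' A \<le> hi*\<epsilon>*A" using lo_pos eps_pos Apos
    by (smt (verit) mult_pos_pos)+
qed

lemma Iv_nonneg: "0 \<le> Iv" unfolding Iv_eq using Lam Dint_nonneg by simp

lemma Dint_bound: "Dint / (lo*\<epsilon>) \<le> (hi/lo) * A * Iv"
proof -
  have "Dint = (f' (2*A) - f' A) * Iv" unfolding Iv_eq using Lam by simp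
  also have "\<dots> \<le> (hi*\<epsilon>*A) * Iv" using Lam Iv_nonneg by (intro mult_right_mono) auto
  finally have "Dint \<le> (hi*\<epsilon>*A) * Iv" .
  then have "Dint / (lo*\<epsilon>) \<le> (hi*\<epsilon>*A) * Iv / (lo*\<epsilon>)" using lo_pos eps_pos by (intro divide_right_mono) auto
  also have "\<dots> = (hi/lo) * A * Iv" using eps_pos lo_pos by (simp add: field_simps)
  finally show ?thesis .
qed

lemma S12_bound:
  "real_of_int k * norm (S1 - S2) \<le> 2*(real_of_int k)^2 + 2*(real (card T) + real (\<Sum>t\<in>T. Nt t))
     + K * (\<Sum>t\<in>T. Dt t) + real (card T) * (hi*X/F2 + hi*X/F2^2 + (hi*X+1)/F2)
     + (real (card T) * BV + 2*BV*(real_of_int k)^2 + 2*BV*real_of_int k)"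
proof -
  have k0: "0 \<le> real_of_int k" using k_facts by simp
  have dec: "of_int k * S1 - of_int k * S2 = (of_int k * S1 - (\<Sum>t\<in>T. P t)) + (\<Sum>t\<in>T. P t - Bt t)
        + (\<Sum>t\<in>T. Bt t - Mt t) + (\<Sum>t\<in>T. Mt t - W t) + ((\<Sum>t\<in>T. W t) - of_int k * S2)"
    by (simp add: sum_subtractf)
  have "real_of_int k * norm (S1 - S2) = norm (of_int k * S1 - of_int k * S2)"
    using k0 by (simp add: norm_mult right_diff_distrib[symmetric])
  also have "\<dots> \<le> norm (of_int k * S1 - (\<Sum>t\<in>T. P t)) + norm (\<Sum>t\<in>T. P t - Bt t)
        + norm (\<Sum>t\<in>T. Bt t - Mt t) + norm (\<Sum>t\<in>T. Mt t - W t) + norm ((\<Sum>t\<in>T. W t) - of_int k * S2)"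
    unfolding dec by (intro order_trans[OF norm_triangle_ineq] add_mono order_refl)
  also have "\<dots> \<le> 2*(real_of_int k)^2 + (\<Sum>t\<in>T. 2 * (1 + real (Nt t))) + (\<Sum>t\<in>T. K * Dt t)
        + (\<Sum>t\<in>T. hi*X/F2 + hi*X/F2^2 + (hi*X+1)/F2)
        + (real (card T) * BV + 2*BV*(real_of_int k)^2 + 2*BV*real_of_int k)"
  proof (intro add_mono)
    show "norm (of_int k * S1 - (\<Sum>t\<in>T. P t)) \<le> 2*(real_of_int k)^2" by (rule step1)
    show "norm (\<Sum>t\<in>T. P t - Bt t) \<le> (\<Sum>t\<in>T. 2 * (1 + real (Nt t)))"
      by (rule order_trans[OF norm_sum sum_mono]) (rule step2)
    show "norm (\<Sum>t\<in>T. Bt t - Mt t) \<le> (\<Sum>t\<in>T. K * Dt t)"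
      by (rule order_trans[OF norm_sum sum_mono]) (rule step3)
    show "norm (\<Sum>t\<in>T. Mt t - W t) \<le> (\<Sum>t\<in>T. hi*X/F2 + hi*X/F2^2 + (hi*X+1)/F2)"
      by (rule order_trans[OF norm_sum sum_mono]) (rule step4)
    show "norm ((\<Sum>t\<in>T. W t) - of_int k * S2) \<le> real (card T) * BV + 2*BV*(real_of_int k)^2 + 2*BV*real_of_int k"
      by (rule step5)
  qed
  also have "(\<Sum>t\<in>T. 2 * (1 + real (Nt t))) = 2*(real (card T) + real (\<Sum>t\<in>T. Nt t))"
    by (simp add: sum_distrib_left[symmetric] sum.distrib)
  also have "(\<Sum>t\<in>T. K * Dt t) = K * (\<Sum>t\<in>T. Dt t)" by (simp add: sum_distrib_left)
  also have "(\<Sum>t\<in>T. hi*X/F2 + hi*X/F2^2 + (hi*X+1)/F2) = real (card T) * (hi*X/F2 + hi*X/F2^2 + (hi*X+1)/F2)"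
    by simp
  finally show ?thesis .
qed

end

context mainset begin

lemma main_bound: "(1/A) * norm (S1 - S2) \<le> Cx*X + Ck/K + CI*Iv"
proof -
  define kr where "kr = real_of_int k"
  define cT where "cT = real (card T)"
  define N where "N = real (\<Sum>t\<in>T. Nt t)"
  define SD where "SD = (\<Sum>t\<in>T. Dt t)"
  define Z where "Z = A * kr"
  define Y where "Y = A * X / m0"
  have kr1: "1 \<le> kr" "kr \<le> K" "K \<le> 2*kr" using k_facts unfolding kr_def by auto
  have cT2: "cT \<le> 2*A" "0 \<le> cT" unfolding cT_def using card_T by auto
  have N0: "0 \<le> N" unfolding N_def by (simp only: of_nat_0_le_iff)
  have NQ: "N \<le> kr * Q" unfolding N_def kr_def using step7 by simp
  have Y1: "1 \<le> Y" "K \<le> Y" "K^2 \<le> Y" unfolding Y_def using inv_A K_A K2_A by auto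
  have m0p: "0 < m0" by (rule m0_pos)
  have hi1: "1 \<le> hi" by (rule hi_ge1)
  have lop: "0 < lo" by (rule lo_pos)
  have F2p: "0 < F2" by (rule F2_pos)
  have X0: "0 \<le> X" by (rule X_nonneg)
  have Iv0: "0 \<le> Iv" by (rule Iv_nonneg)
  have ep: "0 < \<epsilon>" by (rule eps_pos)
  have Kp: "0 < K" by (rule K_pos)
  have Ap: "0 < A" by (rule Apos)
  have Zp: "0 < Z" unfolding Z_def using Ap kr1 by simp
  have dX: "\<delta> = hi * X" unfolding \<delta>_def ..
  have dle: "\<delta> \<le> hi" by (rule delta_le)
  have d0: "0 \<le> \<delta>" by (rule delta_nonneg)
  have SD_b: "SD \<le> (2/K)*(cT + N) + cT * E6 + Dint/(lo*\<epsilon>) + 2 + 1/F2"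
  proof -
    have "(\<Sum>t\<in>T. (1 + real (Nt t))) = cT + N" unfolding cT_def N_def by (simp add: sum.distrib)
    then show ?thesis using step6 unfolding SD_def cT_def by simp
  qed
  have TOT: "kr * norm (S1 - S2) \<le> 2*kr^2 + 2*(cT + N) + K * SD + cT * (hi*X/F2 + hi*X/F2^2 + (hi*X+1)/F2)
     + (cT * BV + 2*BV*kr^2 + 2*BV*kr)"
    using S12_bound unfolding kr_def cT_def N_def SD_def .
  have KSD: "K * SD \<le> 2*(cT + N) + K*cT*E6 + K*(Dint/(lo*\<epsilon>)) + K*(2 + 1/F2)"
  proof -
    have "K * SD \<le> K * ((2/K)*(cT + N) + cT * E6 + Dint/(lo*\<epsilon>) + 2 + 1/F2)"
      using SD_b Kp by (intro mult_left_mono) auto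
    also have "\<dots> = 2*(cT + N) + K*cT*E6 + K*(Dint/(lo*\<epsilon>)) + K*(2 + 1/F2)"
      using Kp by (simp add: field_simps)
    finally show ?thesis .
  qed
  have ZK: "2*A \<le> Z * (4/K)"
  proof -
    have "2*A*K \<le> 2*A*(2*kr)" using kr1 Ap by (intro mult_left_mono) auto
    then show ?thesis unfolding Z_def using Kp by (simp add: field_simps)
  qed
  have h1: "2*kr^2 \<le> Z * ((2/m0)*X)"
  proof -
    have "kr*kr \<le> kr*Y" using kr1 Y1 by (intro mult_left_mono) auto
    then show ?thesis unfolding Z_def Y_def using m0p by (simp add: field_simps power2_eq_square)
  qed
  have h2: "4*cT \<le> Z * (16/K)"
  proof -
    have "4*cT \<le> 4*(2*A)" using cT2 by simp
    also have "\<dots> \<le> 4*(Z*(4/K))" using ZK by simp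
    also have "\<dots> = Z * (16/K)" by simp
    finally show ?thesis .
  qed
  have QA: "Q \<le> A * (QX * X)"
  proof -
    have q1: "2*\<delta>*hi*A/lo = A * ((2*hi^2/lo) * X)" unfolding dX using lop by (simp add: field_simps power2_eq_square)
    have q2: "kr*hi*\<epsilon>*A \<le> A * (hi * X)"
    proof -
      have "kr*\<epsilon> \<le> K*\<epsilon>" using kr1 ep by (intro mult_right_mono) auto
      also have "\<dots> \<le> X" using epsK_le_X by (simp add: mult.commute)
      finally have kx: "kr*\<epsilon> \<le> X" .
      have hx: "hi*(kr*\<epsilon>) \<le> hi*X" using mult_left_mono[OF kx, of hi] hi1 by simp
      have "A*(hi*(kr*\<epsilon>)) \<le> A*(hi*X)" using mult_left_mono[OF hx, of A] Ap by simp
      then show ?thesis by (simp add: algebra_simps)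
    qed
    have q3: "(2*\<delta>+1)*2*\<delta>/(lo*\<epsilon>) \<le> A * (((2*hi+1)*2*hi/(lo*m0)) * X)"
    proof -
      have "(2*\<delta>+1)*2*\<delta>/(lo*\<epsilon>) = (2*\<delta>+1)*2*hi*K^2/lo" unfolding dX X_def using ep lop by (simp add: field_simps)
      also have "\<dots> \<le> (2*hi+1)*2*hi*Y/lo"
      proof -
        have "(2*\<delta>+1)*(2*hi*K^2) \<le> (2*hi+1)*(2*hi*Y)" using dle d0 hi1 Y1 by (intro mult_mono) auto
        then show ?thesis using lop by (intro divide_right_mono) (auto simp: algebra_simps)
      qed
      also have "\<dots> = A * (((2*hi+1)*2*hi/(lo*m0)) * X)" unfolding Y_def using lop m0p by (simp add: field_simps)
      finally show ?thesis .
    qed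
    have q4: "2*\<delta> + 1 \<le> A * (((2*hi+1)/m0) * X)"
    proof -
      have "(2*\<delta>+1)*1 \<le> (2*hi+1)*Y" using dle d0 hi1 Y1 by (intro mult_mono) auto
      then show ?thesis unfolding Y_def using m0p by (simp add: field_simps)
    qed
    have "Q \<le> A * ((2*hi^2/lo) * X) + A * (hi * X) + A * (((2*hi+1)*2*hi/(lo*m0)) * X) + A * (((2*hi+1)/m0) * X)"
      unfolding Q_def kr_def[symmetric] using q1 q2 q3 q4 by linarith
    also have "\<dots> = A * (QX * X)" unfolding QX_def consts_eq[symmetric] by (simp add: algebra_simps)
    finally show ?thesis .
  qed
  have h3: "4*N \<le> Z * ((4*QX)*X)"
  proof -
    have "N \<le> kr * (A * (QX * X))" using NQ QA kr1 by (meson order_trans mult_left_mono zero_le_one)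
    then show ?thesis unfolding Z_def by (simp add: algebra_simps)
  qed
  have E6b: "E6 \<le> E4X * X + (1/F2)/K"
  proof -
    have u1: "(2*hi)*\<epsilon> \<le> (2*hi)*X" using mult_left_mono[OF eps_le_X, of "2*hi"] hi1 by simp
    have u2: "hi*\<epsilon> \<le> hi*X" using mult_left_mono[OF eps_le_X, of hi] hi1 by simp
    have "2*hi*\<epsilon>/F2 \<le> 2*hi*X/F2" using divide_right_mono[OF u1, of F2] F2p by simp
    moreover have "hi*\<epsilon>/F2^2 \<le> hi*X/F2^2" using divide_right_mono[OF u2, of "F2^2"] F2p by simp
    ultimately have "2*hi*\<epsilon>/F2 + hi*\<epsilon>/F2^2 \<le> 2*hi*X/F2 + hi*X/F2^2" by linarith
    then show ?thesis unfolding E6_def E4X_def consts_eq[symmetric] by (simp add: field_simps)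
  qed
  have E4X0: "0 \<le> E4X" unfolding E4X_def consts_eq[symmetric] using hi1 F2p by simp
  have h5: "K*cT*E6 \<le> Z * ((4*E4X)*X + (4/F2)/K)"
  proof -
    have "K*cT \<le> (2*kr)*(2*A)" using kr1 cT2 Ap Kp by (intro mult_mono) auto
    then have KcT: "K*cT \<le> 4*Z" unfolding Z_def by (simp add: mult.commute)
    have "K*cT*E6 \<le> K*cT*(E4X * X + (1/F2)/K)" using E6b Kp cT2 by (intro mult_left_mono) auto
    also have "\<dots> = (K*cT)*(E4X*X) + cT*(1/F2)" using Kp by (simp add: field_simps)
    also have "(K*cT)*(E4X*X) \<le> (4*Z)*(E4X*X)" using KcT E4X0 X0 by (intro mult_right_mono) auto
    also have "cT*(1/F2) \<le> (Z*(4/K))*(1/F2)" using ZK cT2 F2p by (intro mult_right_mono) auto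
    finally show ?thesis by (simp add: algebra_simps)
  qed
  have h6: "K*(Dint/(lo*\<epsilon>)) \<le> Z * (CI * Iv)"
  proof -
    have "K*(Dint/(lo*\<epsilon>)) \<le> K*((hi/lo) * A * Iv)" using Dint_bound Kp by (intro mult_left_mono) auto
    also have "\<dots> \<le> (2*kr)*((hi/lo) * A * Iv)"
    proof -
      have "0 \<le> (hi/lo) * A * Iv" using hi1 lop Ap Iv0 by simp
      then show ?thesis using mult_right_mono[of K "2*kr" "(hi/lo) * A * Iv"] kr1 by simp
    qed
    also have "\<dots> = Z * (CI * Iv)" unfolding Z_def CI_def consts_eq[symmetric] by (simp add: algebra_simps)
    finally show ?thesis .
  qed
  have h7: "K*(2 + 1/F2) \<le> Z * (((2+1/F2)/m0)*X)"
  proof -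
    have "Y*1 \<le> Y*kr" using mult_left_mono[of 1 kr Y] kr1 Y1 by simp
    then have "K \<le> A*kr*X/m0" using Y1 unfolding Y_def by (simp add: algebra_simps)
    then have "K*(2 + 1/F2) \<le> (A*kr*X/m0)*(2 + 1/F2)" using F2p by (intro mult_right_mono) auto
    then show ?thesis unfolding Z_def using m0p by (simp add: field_simps)
  qed
  have h8: "cT * (hi*X/F2 + hi*X/F2^2 + (hi*X+1)/F2) \<le> Z * ((2*E4X)*X + (4/F2)/K)"
  proof -
    have e: "hi*X/F2 + hi*X/F2^2 + (hi*X+1)/F2 = E4X*X + 1/F2" unfolding E4X_def consts_eq[symmetric]
      using F2p by (simp add: field_simps)
    have "cT*(E4X*X) \<le> (2*A)*(E4X*X)" using cT2 E4X0 X0 by (intro mult_right_mono) auto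
    also have "\<dots> \<le> (2*Z)*(E4X*X)" unfolding Z_def using kr1 Ap E4X0 X0 by (intro mult_right_mono) auto
    finally have a1: "cT*(E4X*X) \<le> (2*Z)*(E4X*X)" .
    have a2: "cT*(1/F2) \<le> (Z*(4/K))*(1/F2)" using ZK cT2 F2p by (intro mult_right_mono) auto
    have "cT * (E4X*X + 1/F2) = cT*(E4X*X) + cT*(1/F2)" by (simp add: algebra_simps)
    then show ?thesis unfolding e using a1 a2 by (simp add: algebra_simps)
  qed
  have BV0: "0 \<le> BV" by (rule BV_nonneg)
  have h9: "cT * BV \<le> Z * ((4*BV)/K)"
  proof -
    have "cT * BV \<le> (Z*(4/K)) * BV" using ZK cT2 BV0 by (intro mult_right_mono) auto
    then show ?thesis by (simp add: algebra_simps)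
  qed
  have h10: "2*BV*kr^2 \<le> Z * ((2*BV/m0)*X)"
  proof -
    have "kr*kr \<le> kr*Y" using kr1 Y1 by (intro mult_left_mono) auto
    then have "(2*BV)*(kr*kr) \<le> (2*BV)*(kr*Y)" using mult_left_mono[of "kr*kr" "kr*Y" "2*BV"] BV0 by simp
    then show ?thesis unfolding Z_def Y_def using m0p by (simp add: field_simps power2_eq_square)
  qed
  have h11: "2*BV*kr \<le> Z * ((2*BV/m0)*X)"
  proof -
    have "kr*1 \<le> kr*Y" using kr1 Y1 by (intro mult_left_mono) auto
    then have "(2*BV)*(kr*1) \<le> (2*BV)*(kr*Y)" using mult_left_mono[of "kr*1" "kr*Y" "2*BV"] BV0 by simp
    then show ?thesis unfolding Z_def Y_def using m0p by (simp add: field_simps)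
  qed
  have h23: "4*(cT + N) \<le> Z * (16/K) + Z * ((4*QX)*X)" using h2 h3 by simp
  have sum: "kr * norm (S1 - S2) \<le> Z * ((2/m0)*X) + (Z * (16/K) + Z * ((4*QX)*X)) + Z * ((4*E4X)*X + (4/F2)/K)
       + Z * (CI * Iv) + Z * (((2+1/F2)/m0)*X) + Z * ((2*E4X)*X + (4/F2)/K) + Z * ((4*BV)/K)
       + Z * ((2*BV/m0)*X) + Z * ((2*BV/m0)*X)"
    using TOT KSD h1 h23 h5 h6 h7 h8 h9 h10 h11 by linarith
  also have "\<dots> = Z * (Cx*X + Ck/K + CI*Iv)"
    unfolding Cx_def Ck_def consts_eq[symmetric] by (simp add: algebra_simps add_divide_distrib)
  finally have "kr * norm (S1 - S2) \<le> (A * kr) * (Cx*X + Ck/K + CI*Iv)" unfolding Z_def .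
  then have "kr * norm (S1 - S2) \<le> kr * (A * (Cx*X + Ck/K + CI*Iv))" by (simp add: algebra_simps)
  then have "norm (S1 - S2) \<le> A * (Cx*X + Ck/K + CI*Iv)" using kr1 by simp
  then show ?thesis using Ap by (simp add: field_simps)
qed

end

context fset begin

definition "B0 = 5/2 + 2*c2^2 + 1/(2*F2F)"

lemma trivial_bound:
  assumes A2: "A \<ge> 2" and phi: "\<forall>m. norm (\<phi> m) \<le> 1"
  shows "(1 / A) * norm ((\<Sum>n\<in>{n::int. A < real_of_int n \<and> real_of_int n \<le> 2*A}. \<phi> \<lfloor>f (real_of_int n)\<rfloor>)
              - (\<Sum>m\<in>{m::int. f A < real_of_int m \<and> real_of_int m \<le> f (2*A)}.
                   \<phi> m * complex_of_real (deriv (inv_into {0<..} f) (real_of_int m)))) \<le> B0"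
proof -
  have Ap: "0 < A" using A2 by simp
  have fAp: "0 < f' A" using f'pos Ap by simp
  have F2p: "0 < F2F" unfolding F2F_def using f'pos by simp
  have FA: "F2F \<le> f' A" unfolding F2F_def using f'_mono A2 by simp
  define S1' where "S1' = (\<Sum>n\<in>{n::int. A < real_of_int n \<and> real_of_int n \<le> 2*A}. \<phi> \<lfloor>f (real_of_int n)\<rfloor>)"
  define S2' where "S2' = (\<Sum>m\<in>{m::int. f A < real_of_int m \<and> real_of_int m \<le> f (2*A)}.
                   \<phi> m * complex_of_real (deriv (inv_into {0<..} f) (real_of_int m)))"
  have n1: "norm S1' \<le> A + 1"
  proof -
    have "norm S1' \<le> real (card {n::int. A < real_of_int n \<and> real_of_int n \<le> 2*A})"
      unfolding S1'_def by (rule norm_sum_le_card[OF phi])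
    also have "\<dots> \<le> 2*A - A + 1" by (rule card_int_set_interval) (use Ap in simp)
    finally show ?thesis by simp
  qed
  have ratio: "f' (2*A) \<le> (1 + 2*c2^2) * f' A"
  proof -
    have "f''A_z": "f'' z \<le> c2 * f'' A" if "A \<le> z" "z \<le> 2*A" for z using doubling[of A z] that Ap by simp
    have u: "0*(2*A - A) \<le> f' (2*A) - f' A \<and> f' (2*A) - f' A \<le> (c2 * f'' A)*(2*A - A)"
    proof (rule f'_diff)
      show "0 < A" "A \<le> 2*A" using Ap by auto
      fix z assume z: "A \<le> z" "z \<le> 2*A"
      have "0 < f'' z" using f''pos z Ap by simp
      then show "0 \<le> f'' z \<and> f'' z \<le> c2 * f'' A" using f''A_z[OF z] by simp
    qed
    have l: "(f'' A / c2)*(A - A/2) \<le> f' A - f' (A/2) \<and> f' A - f' (A/2) \<le> (c2 * f'' (A/2))*(A - A/2)"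
    proof (rule f'_diff)
      show "0 < A/2" "A/2 \<le> A" using Ap by auto
      fix z assume z: "A/2 \<le> z" "z \<le> A"
      have d: "f'' A \<le> c2 * f'' z" using doubling[of z A] z Ap by simp
      then have "f'' A / c2 \<le> f'' z" using c2 by (simp add: divide_le_eq mult.commute)
      moreover have "f'' z \<le> c2 * f'' (A/2)" using doubling[of "A/2" z] z Ap by simp
      ultimately show "f'' A / c2 \<le> f'' z \<and> f'' z \<le> c2 * f'' (A/2)" by simp
    qed
    have h2: "0 < f' (A/2)" using f'pos Ap by simp
    have "(f'' A / c2)*(A/2) \<le> f' A" using l h2 by simp
    then have "A * f'' A \<le> 2 * c2 * f' A" using c2 by (simp add: field_simps)
    then have "c2 * (A * f'' A) \<le> c2 * (2 * c2 * f' A)" using c2 by (intro mult_left_mono) auto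
    moreover have "f' (2*A) \<le> f' A + c2 * f'' A * A" using u by simp
    ultimately show ?thesis by (simp add: algebra_simps power2_eq_square)
  qed
  have n2: "norm S2' \<le> A * (1 + 2*c2^2) + 1/F2F"
  proof -
    have "norm S2' \<le> real (card {m::int. f A < real_of_int m \<and> real_of_int m \<le> f (2*A)}) * (1 / f' A)"
      unfolding S2'_def
    proof (rule order_trans[OF norm_sum sum_bounded_above])
      fix m assume m: "m \<in> {m::int. f A < real_of_int m \<and> real_of_int m \<le> f (2*A)}"
      obtain x where x: "A < x" "x \<le> 2*A" "f x = real_of_int m" "deriv (inv_into {0<..} f) (real_of_int m) = 1 / f' x"
        using inv_deriv[of A "2*A" m] m Ap by auto
      have fx: "f' A \<le> f' x" using f'_mono[of A x] x Ap by simp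
      have "norm (\<phi> m * complex_of_real (deriv (inv_into {0<..} f) (real_of_int m))) = norm (\<phi> m) * \<bar>1 / f' x\<bar>"
        unfolding x(4) by (simp only: norm_mult norm_of_real)
      also have "\<dots> \<le> 1 * (1 / f' A)" using phi fx fAp by (intro mult_mono) (auto simp: frac_le)
      finally show "norm (\<phi> m * complex_of_real (deriv (inv_into {0<..} f) (real_of_int m))) \<le> 1 / f' A" by simp
    qed
    also have "\<dots> \<le> (A * f' (2*A) + 1) * (1 / f' A)"
    proof (rule mult_right_mono)
      have "0*(2*A - A) \<le> f (2*A) - f A \<and> f (2*A) - f A \<le> f' (2*A) * (2*A - A)"
        by (rule f_diff) (use Ap f'pos f'_mono in \<open>auto intro: less_imp_le\<close>)
      moreover have "f A \<le> f (2*A)" using f_mono Ap by simp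
      ultimately show "real (card {m::int. f A < real_of_int m \<and> real_of_int m \<le> f (2*A)}) \<le> A * f' (2*A) + 1"
        using card_int_set_interval[of "f A" "f (2*A)"] by (simp add: mult.commute)
    qed (use fAp in simp)
    also have "\<dots> = A * (f' (2*A) / f' A) + 1 / f' A" using fAp by (simp add: field_simps)
    also have "\<dots> \<le> A * (1 + 2*c2^2) + 1/F2F"
    proof (rule add_mono)
      have "f' (2*A) / f' A \<le> 1 + 2*c2^2" using ratio fAp by (simp add: divide_le_eq)
      then show "A * (f' (2*A) / f' A) \<le> A * (1 + 2*c2^2)" using Ap by (intro mult_left_mono) auto
      show "1 / f' A \<le> 1 / F2F" using FA F2p by (intro frac_le) auto
    qed
    finally show ?thesis .
  qed
  have "norm (S1' - S2') \<le> (A + 1) + (A * (1 + 2*c2^2) + 1/F2F)"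
    using norm_triangle_ineq4[of S1' S2'] n1 n2 by linarith
  then have "(1/A) * norm (S1' - S2') \<le> (1/A) * ((A + 1) + (A * (1 + 2*c2^2) + 1/F2F))"
    using Ap by (intro mult_left_mono) auto
  also have "\<dots> = 2 + 2*c2^2 + 1/A + 1/(A*F2F)" using Ap by (simp add: field_simps)
  also have "\<dots> \<le> B0"
  proof -
    have "1/A \<le> 1/2" using A2 by simp
    moreover have "1/(A*F2F) \<le> 1/(2*F2F)" using A2 F2p by (intro frac_le mult_right_mono) auto
    ultimately show ?thesis unfolding B0_def by linarith
  qed
  finally show ?thesis unfolding S1'_def S2'_def .
qed

lemma I_nonneg:
  assumes A2: "A \<ge> 2" and K: "K > 0" and phi: "\<forall>m. norm (\<phi> m) \<le> 1"
  shows "0 \<le> I_avg f f' \<phi> A K"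
proof -
  have Ap: "0 < A" using A2 by simp
  have pq: "f A < f (2*A)" using f_strict Ap by simp
  have a0: "0 < f' A" using f'pos Ap by simp
  have a1: "f' A < f' (2*A)" using f'_strict Ap by simp
  have "0 \<le> integral {f' A..f' (2*A)} (Dfun \<phi> K (f A) (f (2*A)))"
    by (rule integral_nonneg[OF Dfun_integrable[OF K a0 _ phi pq]]) (use a1 a0 Dfun_nonneg[OF K _ phi pq] in auto)
  then show ?thesis unfolding I_avg_eq using a1 by simp
qed

end

theorem proposition1:
  fixes f f' f'' :: "real \<Rightarrow> real" and c1 c2 :: real
  assumes df: "\<And>x. x > 0 \<Longrightarrow> (f has_real_derivative f' x) (at x)"
    and df': "\<And>x. x > 0 \<Longrightarrow> (f' has_real_derivative f'' x) (at x)"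
    and cont: "continuous_on {0<..} f''"
    and fpos: "\<And>x. x > 0 \<Longrightarrow> f x > 0"
    and f'pos: "\<And>x. x > 0 \<Longrightarrow> f' x > 0"
    and f''pos: "\<And>x. x > 0 \<Longrightarrow> f'' x > 0"
    and c1: "c1 \<ge> 1/2" and c2: "c2 > 0"
    and doubling: "\<And>x y. 0 < x \<Longrightarrow> x \<le> y \<Longrightarrow> y \<le> 2*x \<Longrightarrow>
                     c1 * f'' x \<le> f'' y \<and> f'' y \<le> c2 * f'' x"
  shows "\<exists>C. \<forall>\<phi> :: int \<Rightarrow> complex. \<forall>A K :: real.
           (\<forall>m. norm (\<phi> m) \<le> 1) \<longrightarrow> A \<ge> 2 \<longrightarrow> K > 0 \<longrightarrow>
           (1 / A) * norm ((\<Sum>n\<in>{n::int. A < real_of_int n \<and> real_of_int n \<le> 2*A}. \<phi> \<lfloor>f (real_of_int n)\<rfloor>)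
              - (\<Sum>m\<in>{m::int. f A < real_of_int m \<and> real_of_int m \<le> f (2*A)}.
                   \<phi> m * complex_of_real (deriv (inv_into {0<..} f) (real_of_int m))))
           \<le> C * (f'' A * K^2 + (ln A)^2 / K + I_avg f f' \<phi> A K)"
proof -
  interpret fs: fset f f' f'' c1 c2
    using df df' f'pos f''pos c1 c2 doubling by unfold_locales auto
  define L2 where "L2 = (ln (2::real))^2"
  have L2p: "0 < L2" unfolding L2_def by simp
  define C where "C = max (max fs.Cx (fs.Ck/L2)) (max fs.CI (max (fs.B0/fs.\<theta>) (fs.B0/L2)))"
  show ?thesis
  proof (intro exI[of _ C] allI impI)
    fix \<phi> :: "int \<Rightarrow> complex" and A K :: real
    assume phi: "\<forall>m. norm (\<phi> m) \<le> 1" and A2: "A \<ge> 2" and Kp: "K > 0"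
    define LHS where "LHS = (1 / A) * norm ((\<Sum>n\<in>{n::int. A < real_of_int n \<and> real_of_int n \<le> 2*A}. \<phi> \<lfloor>f (real_of_int n)\<rfloor>)
              - (\<Sum>m\<in>{m::int. f A < real_of_int m \<and> real_of_int m \<le> f (2*A)}.
                   \<phi> m * complex_of_real (deriv (inv_into {0<..} f) (real_of_int m))))"
    define X where "X = f'' A * K^2"
    define LK where "LK = (ln A)^2 / K"
    define I where "I = I_avg f f' \<phi> A K"
    have Ap: "0 < A" using A2 by simp
    have X0: "0 \<le> X" unfolding X_def using f''pos[OF Ap] by simp
    have LK0: "0 \<le> LK" unfolding LK_def using Kp by simp
    have I0: "0 \<le> I" unfolding I_def by (rule fs.I_nonneg[OF A2 Kp phi])
    have lnA: "L2 \<le> (ln A)^2" unfolding L2_def using A2 by (intro power_mono) auto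
    have B0: "LHS \<le> fs.B0" unfolding LHS_def by (rule fs.trivial_bound[OF A2 phi])
    have B00: "0 \<le> fs.B0" using B0 LHS_def by (smt (verit) divide_nonneg_nonneg mult_nonneg_nonneg norm_ge_zero Ap)
    have Cge: "fs.Cx \<le> C" "fs.Ck/L2 \<le> C" "fs.CI \<le> C" "fs.B0/fs.\<theta> \<le> C" "fs.B0/L2 \<le> C" unfolding C_def by auto
    have "LHS \<le> C * (X + LK + I)"
    proof (cases "K < 1")
      case True
      have "L2 \<le> L2 / K" using L2p Kp True by (simp add: le_divide_eq)
      also have "\<dots> \<le> LK" unfolding LK_def using lnA Kp by (intro divide_right_mono) auto
      finally have "1 \<le> LK / L2" using L2p by simp
      then have "fs.B0 * 1 \<le> fs.B0 * (LK / L2)" by (rule mult_left_mono[OF _ B00])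
      then have "fs.B0 \<le> (fs.B0/L2) * LK" by simp
      also have "\<dots> \<le> C * LK" using Cge LK0 by (intro mult_right_mono) auto
      also have "\<dots> \<le> C * (X + LK + I)"
      proof -
        have "0 \<le> C" using Cge B00 L2p by (smt (verit) divide_nonneg_nonneg)
        then show ?thesis using X0 I0 by (intro mult_left_mono) auto
      qed
      finally show ?thesis using B0 by simp
    next
      case False
      then have K1: "K \<ge> 1" by simp
      have C0: "0 \<le> C" using Cge B00 L2p by (smt (verit) divide_nonneg_nonneg)
      show ?thesis
      proof (cases "X \<le> fs.\<theta>")
        case False
        have "1 \<le> X / fs.\<theta>" using False fs.theta_pos by simp
        then have "fs.B0 * 1 \<le> fs.B0 * (X / fs.\<theta>)" by (rule mult_left_mono[OF _ B00])
        then have "fs.B0 \<le> (fs.B0/fs.\<theta>) * X" by simp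
        also have "\<dots> \<le> C * X" using Cge X0 by (intro mult_right_mono) auto
        also have "\<dots> \<le> C * (X + LK + I)" using C0 LK0 I0 by (intro mult_left_mono) auto
        finally show ?thesis using B0 by simp
      next
        case True
        interpret ms: mainset f f' f'' c1 c2 A K \<phi>
          using A2 K1 phi True unfolding X_def by unfold_locales auto
        have e1: "ms.S1 = (\<Sum>n\<in>{n::int. A < real_of_int n \<and> real_of_int n \<le> 2*A}. \<phi> \<lfloor>f (real_of_int n)\<rfloor>)"
          unfolding ms.S1_def ms.T_eq ms.Fn_def ..
        have e2: "ms.S2 = (\<Sum>m\<in>{m::int. f A < real_of_int m \<and> real_of_int m \<le> f (2*A)}.
                   \<phi> m * complex_of_real (deriv (inv_into {0<..} f) (real_of_int m)))"
          unfolding ms.S2_def ms.G_def ..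
        have mb: "LHS \<le> fs.Cx * X + fs.Ck / K + fs.CI * I"
          using ms.main_bound unfolding LHS_def e1[symmetric] e2[symmetric] X_def I_def ms.X_def ms.\<epsilon>_def ms.Iv_def .
        have t1: "fs.Cx * X \<le> C * X" using Cge X0 by (intro mult_right_mono) auto
        have t2: "fs.Ck / K \<le> C * LK"
        proof -
          have Ck0: "0 \<le> fs.Ck" unfolding fs.Ck_def fs.BVF_def fs.F2F_def fs.hiF_def using f'pos[of 2] by simp
          have "fs.Ck / K = (fs.Ck / L2) * (L2 / K)" using L2p by simp
          also have "\<dots> \<le> (fs.Ck / L2) * LK" unfolding LK_def using lnA Kp Ck0 L2p
            by (intro mult_left_mono divide_right_mono) auto
          also have "\<dots> \<le> C * LK" using Cge LK0 by (intro mult_right_mono) auto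
          finally show ?thesis .
        qed
        have t3: "fs.CI * I \<le> C * I" using Cge I0 by (intro mult_right_mono) auto
        show ?thesis using mb t1 t2 t3 by (simp add: algebra_simps)
      qed
    qed
    then show "LHS \<le> C * (f'' A * K^2 + (ln A)^2 / K + I_avg f f' \<phi> A K)"
      unfolding X_def LK_def I_def .
  qed
qed


end
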